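(* Let $\phi:A\rightarrow K\{\tau\}$ be a Drinfeld module and let $v$ be a discrete valuation on $K$. If $\phi$ has generic characteristic, assume moreover that $v$ does not lie over the place $v_\infty$ of $\mathrm{Frac}(A)$ associated to the closed point $\infty\in C$. Then there exists a positive constant $C_v$ depending only on $\phi$ and $v$ such that the ball $\{x\in K_v^{\mathrm{alg}} : v(x)\ge C_v\}$ contains no nonzero torsion points of $\phi$.
   Context: Let $p$ be a prime, $q$ a power of $p$, $C$ a nonsingular projective curve over $\mathbb{F}_q$ with a fixed closed point $\infty$, and $A$ the ring of functions on $C$ regular away from $\infty$. Let $K$ be a field extension of $\mathbb{F}_q$ with a fixed ring morphism $i:A\to K$. $K\{\tau\}$ is the ring of polynomials in the Frobenius $\tau:x\mapsto x^q$ with coefficients in $K$, multiplication being composition. A Drinfeld module is a ring morphism $\phi:A\to K\{\tau\}$, $a\mapsto \phi_a$, such that the $\tau^0$-coefficient of $\phi_a$ is $i(a)$ for all $a$ and $\phi_a\ne i(a)\tau^0$ for some $a$. It has generic characteristic if $\ker i=0$ (then $i$ is assumed to extend to an embedding $\mathrm{Frac}(A)\hookrightarrow K$), finite characteristic otherwise. $K_v$ is the completion of $K$ at $v$ (with $v$ having value group $\mathbb{Z}$ on $K$), $K_v^{\mathrm{alg}}$ a fixed algebraic closure to which $v$ is extended (value group $\mathbb{Q}$). A torsion point of $\phi$ in $K_v^{\mathrm{alg}}$ is an $x$ with $\phi_a(x)=0$ for some nonzero $a\in A$. *)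

theory Defs
  imports "HOL-Computational_Algebra.Polynomial"
begin

(* a (Krull) valuation on a field, given on nonzero elements; the value at 0
   (conventionally +infinity) is irrelevant and never used *)
definition valuation :: "('a::field \<Rightarrow> 'b::linordered_ab_group_add) \<Rightarrow> bool" where
  "valuation v \<longleftrightarrow>
     (\<forall>x y. x \<noteq> 0 \<longrightarrow> y \<noteq> 0 \<longrightarrow>
        v (x * y) = v x + v y \<and> (x + y \<noteq> 0 \<longrightarrow> min (v x) (v y) \<le> v (x + y)))"

definition discrete_valuation :: "('a::field \<Rightarrow> int) \<Rightarrow> bool" where
  "discrete_valuation v \<longleftrightarrow> valuation v \<and> (\<forall>n. \<exists>x. x \<noteq> 0 \<and> v x = n)"

definition subfield :: "'a::field set \<Rightarrow> bool" where
  "subfield S \<longleftrightarrow> 0 \<in> S \<and> 1 \<in> S \<and>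
     (\<forall>x\<in>S. \<forall>y\<in>S. x + y \<in> S \<and> x - y \<in> S \<and> x * y \<in> S) \<and>
     (\<forall>x\<in>S. inverse x \<in> S)"

definition coeffs_in :: "'a::zero set \<Rightarrow> 'a poly \<Rightarrow> bool" where
  "coeffs_in S P \<longleftrightarrow> (\<forall>n. coeff P n \<in> S)"

definition transcendental_over :: "'a::field set \<Rightarrow> 'a \<Rightarrow> bool" where
  "transcendental_over S t \<longleftrightarrow> (\<forall>P. coeffs_in S P \<longrightarrow> P \<noteq> 0 \<longrightarrow> poly P t \<noteq> 0)"

definition rat_fun_field :: "'a::field set \<Rightarrow> 'a \<Rightarrow> 'a set" where
  "rat_fun_field S t = {poly P t / poly Q t | P Q. coeffs_in S P \<and> coeffs_in S Q \<and> poly Q t \<noteq> 0}"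

definition finite_dim_over :: "'a::field set \<Rightarrow> bool" where
  "finite_dim_over E \<longleftrightarrow>
     (\<exists>B. finite B \<and> (\<forall>x. \<exists>c. (\<forall>b\<in>B. c b \<in> E) \<and> x = (\<Sum>b\<in>B. c b * b)))"

(* the ambient field (type 'a) is a function field in one variable over the subfield Fq,
   i.e. the function field of a nonsingular projective curve over Fq:
   finitely generated of transcendence degree 1 *)
definition function_field_over :: "'a::field set \<Rightarrow> bool" where
  "function_field_over Fq \<longleftrightarrow>
     (\<exists>t. transcendental_over Fq t \<and> finite_dim_over (rat_fun_field Fq t))"

(* places of F/Fq (= closed points of the curve C), represented by their normalized
   discrete valuations, trivial on Fq *)
definition place :: "'a::field set \<Rightarrow> ('a \<Rightarrow> int) \<Rightarrow> bool" where
  "place Fq w \<longleftrightarrow> discrete_valuation w \<and> (\<forall>c\<in>Fq. c \<noteq> 0 \<longrightarrow> w c = 0)"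

definition same_val :: "('a::field \<Rightarrow> 'b) \<Rightarrow> ('a \<Rightarrow> 'b) \<Rightarrow> bool" where
  "same_val w w' \<longleftrightarrow> (\<forall>x. x \<noteq> 0 \<longrightarrow> w x = w' x)"

definition ring_A :: "'a::field set \<Rightarrow> ('a \<Rightarrow> int) \<Rightarrow> 'a set" where
  "ring_A Fq vinf = {f. \<forall>w. place Fq w \<longrightarrow> \<not> same_val w vinf \<longrightarrow> f = 0 \<or> 0 \<le> w f}"

(* an element  sum_n c_n tau^n  of K{tau} is stored as the polynomial with coefficients c_n;
   multiplication in K{tau} (composition): tau^i c = c^(q^i) tau^i *)
definition tmult :: "nat \<Rightarrow> 'a::field poly \<Rightarrow> 'a poly \<Rightarrow> 'a poly" where
  "tmult q f g = (\<Sum>i\<le>degree f. monom (coeff f i) i * map_poly (\<lambda>c. c ^ (q ^ i)) g)"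

definition tau_eval :: "nat \<Rightarrow> 'a::field poly \<Rightarrow> 'a \<Rightarrow> 'a" where
  "tau_eval q f x = (\<Sum>n\<le>degree f. coeff f n * x ^ (q ^ n))"

definition ring_hom_on :: "'a::field set \<Rightarrow> ('a \<Rightarrow> 'b::field) \<Rightarrow> bool" where
  "ring_hom_on A i \<longleftrightarrow> i 1 = 1 \<and> (\<forall>a\<in>A. \<forall>b\<in>A. i (a + b) = i a + i b \<and> i (a * b) = i a * i b)"

definition drinfeld_module ::
    "nat \<Rightarrow> 'a::field set \<Rightarrow> ('a \<Rightarrow> 'k::field) \<Rightarrow> ('a \<Rightarrow> 'k poly) \<Rightarrow> bool" where
  "drinfeld_module q A i \<phi> \<longleftrightarrow>
     \<phi> 1 = 1 \<and>
     (\<forall>a\<in>A. \<forall>b\<in>A. \<phi> (a + b) = \<phi> a + \<phi> b \<and> \<phi> (a * b) = tmult q (\<phi> a) (\<phi> b)) \<and>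
     (\<forall>a\<in>A. coeff (\<phi> a) 0 = i a) \<and>
     (\<exists>a\<in>A. \<phi> a \<noteq> [:i a:])"

definition generic_char :: "'a::field set \<Rightarrow> ('a \<Rightarrow> 'k::field) \<Rightarrow> bool" where
  "generic_char A i \<longleftrightarrow> (\<forall>a\<in>A. i a = 0 \<longrightarrow> a = 0)"

(* v (on K) lies over v_inf: the valuation v \<circ> i on Frac(A) is equivalent to v_inf
   (a positive multiple of it); checked on A, which generates Frac(A) *)
definition lies_over :: "'a::field set \<Rightarrow> ('a \<Rightarrow> 'k::field) \<Rightarrow> ('k \<Rightarrow> int) \<Rightarrow> ('a \<Rightarrow> int) \<Rightarrow> bool" where
  "lies_over A i v vinf \<longleftrightarrow>
     (\<exists>e::real. e > 0 \<and> (\<forall>a\<in>A. a \<noteq> 0 \<longrightarrow> real_of_int (v (i a)) = e * real_of_int (vinf a)))"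

definition field_hom :: "('a::field \<Rightarrow> 'b::field) \<Rightarrow> bool" where
  "field_hom j \<longleftrightarrow> j 1 = 1 \<and> (\<forall>x y. j (x + y) = j x + j y \<and> j (x * y) = j x * j y)"

definition val_converges :: "('a::field \<Rightarrow> rat) \<Rightarrow> (nat \<Rightarrow> 'a) \<Rightarrow> 'a \<Rightarrow> bool" where
  "val_converges w s l \<longleftrightarrow> (\<forall>M. \<exists>N. \<forall>n\<ge>N. s n \<noteq> l \<longrightarrow> M \<le> w (s n - l))"

definition val_cauchy :: "('a::field \<Rightarrow> rat) \<Rightarrow> (nat \<Rightarrow> 'a) \<Rightarrow> bool" where
  "val_cauchy w s \<longleftrightarrow> (\<forall>M. \<exists>N. \<forall>m\<ge>N. \<forall>n\<ge>N. s m \<noteq> s n \<longrightarrow> M \<le> w (s m - s n))"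

definition completion_in :: "('k \<Rightarrow> 'l::field) \<Rightarrow> ('l \<Rightarrow> rat) \<Rightarrow> 'l set" where
  "completion_in j w = {l. \<exists>s. (\<forall>n. s n \<in> range j) \<and> val_converges w s l}"

(* (L, w, j) is an algebraic closure K_v^alg of the completion K_v of (K, v), with the
   valuation v extended to it *)
definition is_alg_closure_of_completion ::
    "('k::field \<Rightarrow> int) \<Rightarrow> ('k \<Rightarrow> 'l::field) \<Rightarrow> ('l \<Rightarrow> rat) \<Rightarrow> bool" where
  "is_alg_closure_of_completion v j w \<longleftrightarrow>
     field_hom j \<and> valuation w \<and>
     (\<forall>x. x \<noteq> 0 \<longrightarrow> w (j x) = of_int (v x)) \<and>
     (\<forall>s. (\<forall>n. s n \<in> range j) \<longrightarrow> val_cauchy w s \<longrightarrow> (\<exists>l. val_converges w s l)) \<and>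
     (\<forall>P::'l poly. degree P \<ge> 1 \<longrightarrow> (\<exists>x. poly P x = 0)) \<and>
     (\<forall>x. \<exists>P. P \<noteq> 0 \<and> coeffs_in (completion_in j w) P \<and> poly P x = 0)"

definition torsion_point ::
    "nat \<Rightarrow> 'a::field set \<Rightarrow> ('a \<Rightarrow> 'k::field poly) \<Rightarrow> ('k \<Rightarrow> 'l::field) \<Rightarrow> 'l \<Rightarrow> bool" where
  "torsion_point q A \<phi> j x \<longleftrightarrow> (\<exists>a\<in>A. a \<noteq> 0 \<and> tau_eval q (map_poly j (\<phi> a)) x = 0)"

end

theory Submission
  imports Defs
begin

section \<open>Valuation basics\<close>

context
  fixes v :: "'a::field \<Rightarrow> 'b::linordered_idom"
  assumes V: "valuation v"
begin

lemma val_mult: "x \<noteq> 0 \<Longrightarrow> y \<noteq> 0 \<Longrightarrow> v (x*y) = v x + v y"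
  using V by (simp add: valuation_def)

lemma val_add: "x \<noteq> 0 \<Longrightarrow> y \<noteq> 0 \<Longrightarrow> x + y \<noteq> 0 \<Longrightarrow> min (v x) (v y) \<le> v (x+y)"
  using V by (simp add: valuation_def)

lemma val_one: "v 1 = 0"
  using val_mult[of 1 1] by simp

lemma val_minus_one: "v (-1) = 0"
proof -
  have "v 1 = v (-1) + v (-1)" using val_mult[of "-1" "-1"] by simp
  hence "v (-1) + v(-1) = 0" using val_one by simp
  thus ?thesis by (metis add_nonneg_eq_0_iff add_strict_mono less_irrefl not_less)
qed

lemma val_uminus: "x \<noteq> 0 \<Longrightarrow> v (-x) = v x"
  using val_mult[of "-1" x] val_minus_one by simp

lemma val_inverse: "x \<noteq> 0 \<Longrightarrow> v (inverse x) = - v x"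
  using val_mult[of x "inverse x"] val_one by (simp add: eq_neg_iff_add_eq_0)

lemma val_divide: "x \<noteq> 0 \<Longrightarrow> y \<noteq> 0 \<Longrightarrow> v (x / y) = v x - v y"
  by (simp add: divide_inverse val_mult val_inverse)

lemma val_power: "x \<noteq> 0 \<Longrightarrow> v (x ^ n) = of_nat n * v x"
  by (induction n) (auto simp: val_one val_mult algebra_simps)

definition vge :: "'b \<Rightarrow> 'a \<Rightarrow> bool" where
  "vge M x \<longleftrightarrow> x = 0 \<or> M \<le> v x"

definition vgt :: "'b \<Rightarrow> 'a \<Rightarrow> bool" where
  "vgt M x \<longleftrightarrow> x = 0 \<or> M < v x"

lemma vge_0[simp]: "vge M 0" by (simp add: vge_def)
lemma vgt_0[simp]: "vgt M 0" by (simp add: vgt_def)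

lemma vge_add: "vge M x \<Longrightarrow> vge M y \<Longrightarrow> vge M (x + y)"
  unfolding vge_def using val_add[of x y] by (cases "x = 0"; cases "y = 0"; cases "x + y = 0") auto

lemma vgt_add: "vgt M x \<Longrightarrow> vgt M y \<Longrightarrow> vgt M (x + y)"
  unfolding vgt_def using val_add[of x y] by (cases "x = 0"; cases "y = 0"; cases "x + y = 0") auto

lemma vge_uminus: "vge M x \<Longrightarrow> vge M (-x)"
  unfolding vge_def by (cases "x = 0") (simp_all add: val_uminus)

lemma vgt_uminus: "vgt M x \<Longrightarrow> vgt M (-x)"
  unfolding vgt_def by (cases "x = 0") (simp_all add: val_uminus)

lemma vge_diff: "vge M x \<Longrightarrow> vge M y \<Longrightarrow> vge M (x - y)"
  using vge_add[of M x "-y"] vge_uminus[of M y] by simp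

lemma vge_sum: "(\<And>i. i \<in> I \<Longrightarrow> vge M (f i)) \<Longrightarrow> vge M (\<Sum>i\<in>I. f i)"
  by (induction I rule: infinite_finite_induct) (auto intro: vge_add)

lemma vgt_sum: "(\<And>i. i \<in> I \<Longrightarrow> vgt M (f i)) \<Longrightarrow> vgt M (\<Sum>i\<in>I. f i)"
  by (induction I rule: infinite_finite_induct) (auto intro: vgt_add)

lemma vge_mono: "vge M x \<Longrightarrow> N \<le> M \<Longrightarrow> vge N x"
  unfolding vge_def by auto

lemma vge_mult: "vge M x \<Longrightarrow> y \<noteq> 0 \<Longrightarrow> vge (M + v y) (y * x)"
  unfolding vge_def by (cases "x = 0") (simp_all add: val_mult add.commute)

lemma dominate:
  assumes a: "a \<noteq> 0" and r: "vgt (v a) r"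
  shows "a + r \<noteq> 0 \<and> v (a + r) = v a"
proof (cases "r = 0")
  case True then show ?thesis using a by simp
next
  case False
  hence vr: "v a < v r" using r by (simp add: vgt_def)
  have ne: "a + r \<noteq> 0"
  proof
    assume "a + r = 0"
    hence "r = -a" by (simp add: eq_neg_iff_add_eq_0 add.commute)
    thus False using vr val_uminus[OF a] by simp
  qed
  have 1: "min (v a) (v r) \<le> v (a + r)" using val_add[OF a False ne] .
  have 2: "min (v (a + r)) (v (-r)) \<le> v a"
    using val_add[of "a + r" "-r"] ne False a by simp
  have 2: "min (v (a + r)) (v r) \<le> v a" using 2 val_uminus[OF False] by simp
  show ?thesis using 1 2 vr ne by (auto simp: min_def split: if_splits)
qed

end

definition cl :: "'a::field set \<Rightarrow> bool" where
  "cl S \<longleftrightarrow> 0 \<in> S \<and> 1 \<in> S \<and> (\<forall>x\<in>S. \<forall>y\<in>S. x + y \<in> S \<and> x * y \<in> S) \<and> (\<forall>x\<in>S. -x \<in> S)"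

lemma subfield_cl: "subfield S \<Longrightarrow> cl S"
  unfolding subfield_def cl_def by (metis diff_0)

context fixes S :: "'a::field set" assumes C: "cl S"
begin
lemma cl_0[simp]: "0 \<in> S" using C by (simp add: cl_def)
lemma cl_1[simp]: "1 \<in> S" using C by (simp add: cl_def)
lemma cl_add: "x \<in> S \<Longrightarrow> y \<in> S \<Longrightarrow> x + y \<in> S" using C by (simp add: cl_def)
lemma cl_mult: "x \<in> S \<Longrightarrow> y \<in> S \<Longrightarrow> x * y \<in> S" using C by (simp add: cl_def)
lemma cl_uminus: "x \<in> S \<Longrightarrow> -x \<in> S" using C by (simp add: cl_def)
lemma cl_diff: "x \<in> S \<Longrightarrow> y \<in> S \<Longrightarrow> x - y \<in> S" using cl_add cl_uminus by (metis diff_conv_add_uminus)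
lemma cl_sum: "(\<And>i. i \<in> I \<Longrightarrow> f i \<in> S) \<Longrightarrow> (\<Sum>i\<in>I. f i) \<in> S"
  by (induction I rule: infinite_finite_induct) (auto intro: cl_add)
lemma cl_prod: "(\<And>i. i \<in> I \<Longrightarrow> f i \<in> S) \<Longrightarrow> (\<Prod>i\<in>I. f i) \<in> S"
  by (induction I rule: infinite_finite_induct) (auto intro: cl_mult)
lemma cl_power: "x \<in> S \<Longrightarrow> x ^ n \<in> S"
  by (induction n) (auto intro: cl_mult)
lemma cl_of_nat: "of_nat n \<in> S"
  by (induction n) (auto intro: cl_add)
lemma cl_poly: "coeffs_in S P \<Longrightarrow> x \<in> S \<Longrightarrow> poly P x \<in> S"
  unfolding poly_altdef coeffs_in_def by (auto intro!: cl_sum cl_mult cl_power)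
lemma coeffs_in_add: "coeffs_in S P \<Longrightarrow> coeffs_in S Q \<Longrightarrow> coeffs_in S (P + Q)"
  unfolding coeffs_in_def by (auto intro: cl_add)
lemma coeffs_in_uminus: "coeffs_in S P \<Longrightarrow> coeffs_in S (-P)"
  unfolding coeffs_in_def by (auto intro: cl_uminus)
lemma coeffs_in_diff: "coeffs_in S P \<Longrightarrow> coeffs_in S Q \<Longrightarrow> coeffs_in S (P - Q)"
  unfolding coeffs_in_def by (auto intro: cl_diff)
lemma coeffs_in_mult: "coeffs_in S P \<Longrightarrow> coeffs_in S Q \<Longrightarrow> coeffs_in S (P * Q)"
  unfolding coeffs_in_def coeff_mult by (auto intro!: cl_sum cl_mult)
lemma coeffs_in_0[simp]: "coeffs_in S 0" by (simp add: coeffs_in_def)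
lemma coeffs_in_1[simp]: "coeffs_in S 1" by (simp add: coeffs_in_def coeff_1)
lemma coeffs_in_const: "c \<in> S \<Longrightarrow> coeffs_in S [:c:]" by (simp add: coeffs_in_def coeff_pCons split: nat.split)
lemma coeffs_in_monom: "c \<in> S \<Longrightarrow> coeffs_in S (monom c n)" by (simp add: coeffs_in_def coeff_monom)
lemma coeffs_in_power: "coeffs_in S P \<Longrightarrow> coeffs_in S (P ^ n)"
  by (induction n) (auto intro: coeffs_in_mult)
lemma coeffs_in_prod: "(\<And>i. i \<in> I \<Longrightarrow> coeffs_in S (f i)) \<Longrightarrow> coeffs_in S (\<Prod>i\<in>I. f i)"
  by (induction I rule: infinite_finite_induct) (auto intro: coeffs_in_mult)
lemma coeffs_in_sum: "(\<And>i. i \<in> I \<Longrightarrow> coeffs_in S (f i)) \<Longrightarrow> coeffs_in S (\<Sum>i\<in>I. f i)"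
  by (induction I rule: infinite_finite_induct) (auto intro: coeffs_in_add)
lemma coeffs_in_X: "coeffs_in S [:0,1:]" by (simp add: coeffs_in_def coeff_pCons split: nat.split)
end

lemma coeffs_in_pCons: "coeffs_in S (pCons c P) \<longleftrightarrow> c \<in> S \<and> coeffs_in S P"
  unfolding coeffs_in_def by (auto simp: coeff_pCons split: nat.split)

lemma coeffs_in_mono: "coeffs_in S P \<Longrightarrow> S \<subseteq> T \<Longrightarrow> coeffs_in T P"
  unfolding coeffs_in_def by auto


section \<open>Spans and linear dependence\<close>

definition in_span :: "'a::field set \<Rightarrow> 'a set \<Rightarrow> 'a \<Rightarrow> bool" where
  "in_span E S x \<longleftrightarrow> (\<exists>c. (\<forall>b\<in>S. c b \<in> E) \<and> x = (\<Sum>b\<in>S. c b * b))"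

context fixes E :: "'a::field set" assumes E: "subfield E"
begin

lemma E_cl: "cl E" using E by (rule subfield_cl)

lemma E_inverse: "x \<in> E \<Longrightarrow> inverse x \<in> E" using E by (simp add: subfield_def)

lemma E_divide: "x \<in> E \<Longrightarrow> y \<in> E \<Longrightarrow> x / y \<in> E"
  by (simp add: divide_inverse E_inverse cl_mult[OF E_cl])

lemma in_span_0: "in_span E S 0"
  unfolding in_span_def by (rule exI[of _ "\<lambda>_. 0"]) (simp add: cl_0[OF E_cl])

lemma in_span_elem: assumes "finite S" "b \<in> S" shows "in_span E S b"
  unfolding in_span_def
proof (rule exI[of _ "\<lambda>b'. if b' = b then 1 else 0"], intro conjI)
  show "\<forall>b'\<in>S. (if b' = b then 1 else 0) \<in> E" using E_cl by simp
  show "b = (\<Sum>b'\<in>S. (if b' = b then 1 else 0) * b')"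
  proof -
    have "(\<Sum>b'\<in>S. (if b' = b then 1 else 0) * b') = (\<Sum>b'\<in>S. (if b' = b then b' else 0))"
      by (rule sum.cong) auto
    also have "\<dots> = b" using assms by (simp add: sum.delta)
    finally show ?thesis by simp
  qed
qed

lemma in_span_add: assumes "in_span E S x" "in_span E S y" shows "in_span E S (x + y)"
proof -
  obtain c where c: "\<forall>b\<in>S. c b \<in> E" "x = (\<Sum>b\<in>S. c b * b)" using assms(1) unfolding in_span_def by blast
  obtain d where d: "\<forall>b\<in>S. d b \<in> E" "y = (\<Sum>b\<in>S. d b * b)" using assms(2) unfolding in_span_def by blast
  show ?thesis unfolding in_span_def
    by (rule exI[of _ "\<lambda>b. c b + d b"]) (use c d E_cl in \<open>auto simp: sum.distrib distrib_right intro: cl_add\<close>)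
qed

lemma in_span_smult: assumes "in_span E S x" "e \<in> E" shows "in_span E S (e * x)"
proof -
  obtain c where c: "\<forall>b\<in>S. c b \<in> E" "x = (\<Sum>b\<in>S. c b * b)" using assms(1) unfolding in_span_def by blast
  show ?thesis unfolding in_span_def
    by (rule exI[of _ "\<lambda>b. e * c b"]) (use c assms(2) E_cl in \<open>auto simp: sum_distrib_left mult.assoc intro: cl_mult\<close>)
qed

lemma in_span_uminus: assumes "in_span E S x" shows "in_span E S (- x)"
  using in_span_smult[OF assms, of "-1"] cl_uminus[OF E_cl, of 1] E_cl by simp

lemma in_span_diff: assumes "in_span E S x" "in_span E S y" shows "in_span E S (x - y)"
  using in_span_add[OF assms(1) in_span_uminus[OF assms(2)]] by simp

lemma in_span_sum: "(\<And>i. i \<in> I \<Longrightarrow> in_span E S (f i)) \<Longrightarrow> in_span E S (\<Sum>i\<in>I. f i)"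
  by (induction I rule: infinite_finite_induct) (auto intro: in_span_add in_span_0)

lemma in_span_empty: "in_span E {} x \<Longrightarrow> x = 0"
  unfolding in_span_def by simp

lemma DEP:
  assumes "finite S"
  shows "finite I \<Longrightarrow> card S < card I \<Longrightarrow> (\<forall>i\<in>I. in_span E S (x i)) \<Longrightarrow>
     \<exists>c. (\<forall>i\<in>I. c i \<in> E) \<and> (\<exists>i\<in>I. c i \<noteq> 0) \<and> (\<Sum>i\<in>I. c i * x i) = 0"
  using assms
proof (induction S arbitrary: I x rule: finite_induct)
  case empty
  then obtain i0 where i0: "i0 \<in> I" by (metis card.empty ex_in_conv card_0_eq less_nat_zero_code)
  have x0: "\<forall>i\<in>I. x i = 0" using empty.prems in_span_empty by blast
  show ?case
    by (rule exI[of _ "\<lambda>i. if i = i0 then 1 else 0"]) (use i0 x0 E_cl in auto)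
next
  case (insert b S)
  have "\<forall>i\<in>I. \<exists>c. (\<forall>b'\<in>insert b S. c b' \<in> E) \<and> x i = (\<Sum>b'\<in>insert b S. c b' * b')"
    using insert.prems(3) unfolding in_span_def by blast
  then obtain cc where cc: "\<And>i. i \<in> I \<Longrightarrow> (\<forall>b'\<in>insert b S. cc i b' \<in> E) \<and> x i = (\<Sum>b'\<in>insert b S. cc i b' * b')"
    by metis
  define d where "d i = cc i b" for i
  have xi: "x i = d i * b + (\<Sum>b'\<in>S. cc i b' * b')" if "i \<in> I" for i
    using cc[OF that] insert.hyps by (simp add: d_def)
  have dE: "d i \<in> E" if "i \<in> I" for i using cc[OF that] by (simp add: d_def)
  have ccE: "cc i b' \<in> E" if "i \<in> I" "b' \<in> S" for i b' using cc[OF that(1)] that(2) by simp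
  show ?case
  proof (cases "\<forall>i\<in>I. d i = 0")
    case True
    have "\<forall>i\<in>I. in_span E S (x i)"
    proof
      fix i assume i: "i \<in> I"
      have "x i = (\<Sum>b'\<in>S. cc i b' * b')" using xi[OF i] True i by simp
      thus "in_span E S (x i)" unfolding in_span_def using ccE[OF i] by blast
    qed
    moreover have "card S < card I" using insert.prems(2) insert.hyps by simp
    ultimately show ?thesis using insert.IH insert.prems(1) by blast
  next
    case False
    then obtain r where r: "r \<in> I" "d r \<noteq> 0" by blast
    define I' where "I' = I - {r}"
    define x' where "x' i = x i - (d i / d r) * x r" for i
    have span': "\<forall>i\<in>I'. in_span E S (x' i)"
    proof
      fix i assume i: "i \<in> I'"
      hence iI: "i \<in> I" by (simp add: I'_def)
      have "x' i = (\<Sum>b'\<in>S. (cc i b' - (d i / d r) * cc r b') * b')"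
        unfolding x'_def xi[OF iI] xi[OF r(1)] using r(2)
        by (simp add: algebra_simps sum_subtractf sum_distrib_left)
      moreover have "\<forall>b'\<in>S. cc i b' - (d i / d r) * cc r b' \<in> E"
        using ccE[OF iI] ccE[OF r(1)] dE[OF iI] dE[OF r(1)]
        by (auto intro!: cl_diff[OF E_cl] cl_mult[OF E_cl] E_divide)
      ultimately show "in_span E S (x' i)" unfolding in_span_def
        by (intro exI[of _ "\<lambda>b'. cc i b' - (d i / d r) * cc r b'"]) auto
    qed
    have "card S < card I'" using insert.prems(1,2) insert.hyps r(1) by (simp add: I'_def)
    moreover have "finite I'" using insert.prems(1) by (simp add: I'_def)
    ultimately obtain c' where c': "\<forall>i\<in>I'. c' i \<in> E" "\<exists>i\<in>I'. c' i \<noteq> 0" "(\<Sum>i\<in>I'. c' i * x' i) = 0"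
      using insert.IH span' by blast
    define c'' where "c'' i = (if i = r then - (\<Sum>k\<in>I'. c' k * d k) / d r else c' i)" for i
    have "(\<Sum>i\<in>I'. c' i * x' i) = (\<Sum>i\<in>I'. c' i * x i) - (\<Sum>k\<in>I'. c' k * d k) / d r * x r"
      unfolding x'_def by (simp add: algebra_simps sum_subtractf sum_distrib_left sum_distrib_right sum_divide_distrib)
    hence eq: "(\<Sum>i\<in>I'. c' i * x i) = (\<Sum>k\<in>I'. c' k * d k) / d r * x r" using c'(3) by simp
    have "(\<Sum>i\<in>I. c'' i * x i) = c'' r * x r + (\<Sum>i\<in>I'. c'' i * x i)"
      unfolding I'_def using insert.prems(1) r(1) by (simp add: sum.remove)
    also have "(\<Sum>i\<in>I'. c'' i * x i) = (\<Sum>i\<in>I'. c' i * x i)"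
      by (rule sum.cong) (auto simp: c''_def I'_def)
    finally have "(\<Sum>i\<in>I. c'' i * x i) = 0" using eq by (simp add: c''_def)
    moreover have "\<forall>i\<in>I. c'' i \<in> E"
      using c'(1) dE r by (auto simp: c''_def I'_def intro!: cl_uminus[OF E_cl] E_divide cl_sum[OF E_cl] cl_mult[OF E_cl])
    moreover have "\<exists>i\<in>I. c'' i \<noteq> 0" using c'(2) by (auto simp: c''_def I'_def)
    ultimately show ?thesis by blast
  qed
qed

end


section \<open>Rational function fields\<close>

lemma rf_iff: "x \<in> rat_fun_field S t \<longleftrightarrow>
   (\<exists>P Q. coeffs_in S P \<and> coeffs_in S Q \<and> poly Q t \<noteq> 0 \<and> x = poly P t / poly Q t)"
  unfolding rat_fun_field_def by blast

lemma poly_bound: fixes x :: "'a::comm_ring_1" assumes "degree p \<le> M" shows "poly p x = (\<Sum>m\<le>M. coeff p m * x ^ m)"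
proof -
  have "(\<Sum>m\<le>degree p. coeff p m * x ^ m) = (\<Sum>m\<le>M. coeff p m * x ^ m)"
    by (rule sum.mono_neutral_left) (use assms in \<open>auto simp: coeff_eq_0\<close>)
  moreover have "poly p x = (\<Sum>m\<le>degree p. coeff p m * x ^ m)" by (rule poly_altdef)
  ultimately show ?thesis by simp
qed

context fixes S :: "'a::field set" assumes S: "subfield S"
begin

lemma S_cl: "cl S" using S by (rule subfield_cl)

lemma rf_poly: "coeffs_in S P \<Longrightarrow> poly P t \<in> rat_fun_field S t"
  unfolding rf_iff by (rule exI[of _ P], rule exI[of _ 1]) (simp add: coeffs_in_1[OF S_cl])

lemma rf_const: "c \<in> S \<Longrightarrow> c \<in> rat_fun_field S t"
  using rf_poly[of "[:c:]" t] coeffs_in_const[OF S_cl] by simp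

lemma rf_subfield: "subfield (rat_fun_field S t)"
proof -
  let ?R = "rat_fun_field S t"
  have add: "x + y \<in> ?R \<and> x - y \<in> ?R \<and> x * y \<in> ?R" if xR: "x \<in> ?R" and yR: "y \<in> ?R" for x y
  proof -
    obtain P1 Q1 where 1: "coeffs_in S P1" "coeffs_in S Q1" "poly Q1 t \<noteq> 0" "x = poly P1 t / poly Q1 t"
      using xR unfolding rf_iff by blast
    obtain P2 Q2 where 2: "coeffs_in S P2" "coeffs_in S Q2" "poly Q2 t \<noteq> 0" "y = poly P2 t / poly Q2 t"
      using yR unfolding rf_iff by blast
    have q: "poly (Q1 * Q2) t \<noteq> 0" using 1 2 by simp
    have cq: "coeffs_in S (Q1 * Q2)" using 1 2 coeffs_in_mult[OF S_cl] by blast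
    have "x + y = poly (P1 * Q2 + P2 * Q1) t / poly (Q1 * Q2) t"
      unfolding 1(4) 2(4) using 1(3) 2(3) by (simp add: add_frac_eq poly_mult)
    moreover have "x - y = poly (P1 * Q2 - P2 * Q1) t / poly (Q1 * Q2) t"
      unfolding 1(4) 2(4) using 1(3) 2(3) by (simp add: diff_frac_eq poly_mult)
    moreover have "x * y = poly (P1 * P2) t / poly (Q1 * Q2) t"
      unfolding 1(4) 2(4) by (simp add: poly_mult)
    moreover have "coeffs_in S (P1 * Q2 + P2 * Q1)" "coeffs_in S (P1 * Q2 - P2 * Q1)" "coeffs_in S (P1 * P2)"
      using 1 2 by (auto intro!: coeffs_in_add[OF S_cl] coeffs_in_diff[OF S_cl] coeffs_in_mult[OF S_cl])
    ultimately show ?thesis unfolding rf_iff using q cq by blast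
  qed
  have inv: "inverse x \<in> ?R" if xR: "x \<in> ?R" for x
  proof -
    obtain P1 Q1 where 1: "coeffs_in S P1" "coeffs_in S Q1" "poly Q1 t \<noteq> 0" "x = poly P1 t / poly Q1 t"
      using xR unfolding rf_iff by blast
    show ?thesis
    proof (cases "poly P1 t = 0")
      case True
      then show ?thesis using 1 rf_poly[of 0 t] coeffs_in_0[OF S_cl] by simp
    next
      case False
      then show ?thesis unfolding rf_iff using 1
        by (intro exI[of _ Q1] exI[of _ P1]) simp
    qed
  qed
  show ?thesis unfolding subfield_def
    using add inv rf_poly[of 0 t] rf_poly[of 1 t] by (simp add: coeffs_in_1[OF S_cl] coeffs_in_0[OF S_cl])
qed

lemma common_den:
  assumes "finite I"
  shows "(\<forall>i\<in>I. r i \<in> rat_fun_field S t) \<Longrightarrow>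
    \<exists>Q P. coeffs_in S Q \<and> poly Q t \<noteq> 0 \<and> (\<forall>i. coeffs_in S (P i)) \<and> (\<forall>i\<in>I. r i * poly Q t = poly (P i) t)"
  using assms
proof (induction I rule: finite_induct)
  case empty
  then show ?case by (intro exI[of _ 1] exI[of _ "\<lambda>_. 0"]) (simp add: coeffs_in_1[OF S_cl] coeffs_in_0[OF S_cl])
next
  case (insert i I)
  then obtain Q P where QP: "coeffs_in S Q" "poly Q t \<noteq> 0" "\<forall>i. coeffs_in S (P i)" "\<forall>i\<in>I. r i * poly Q t = poly (P i) t"
    by auto
  obtain A B where AB: "coeffs_in S A" "coeffs_in S B" "poly B t \<noteq> 0" "r i = poly A t / poly B t"
    using insert.prems unfolding rf_iff by auto
  define P' where "P' k = (if k = i then A * Q else P k * B)" for k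
  show ?case
  proof (intro exI[of _ "Q * B"] exI[of _ P'] conjI)
    show "coeffs_in S (Q * B)" using QP AB coeffs_in_mult[OF S_cl] by blast
    show "poly (Q * B) t \<noteq> 0" using QP AB by simp
    show "\<forall>k. coeffs_in S (P' k)" using QP AB coeffs_in_mult[OF S_cl] by (simp add: P'_def)
    show "\<forall>k\<in>insert i I. r k * poly (Q * B) t = poly (P' k) t"
    proof
      fix k assume k: "k \<in> insert i I"
      show "r k * poly (Q * B) t = poly (P' k) t"
      proof (cases "k = i")
        case True then show ?thesis using AB by (simp add: P'_def)
      next
        case False
        hence "k \<in> I" using k by simp
        hence "r k * poly Q t = poly (P k) t" using QP by simp
        have "r k * poly (Q * B) t = (r k * poly Q t) * poly B t" by (simp add: mult.assoc)
        also have "\<dots> = poly (P k * B) t" using \<open>r k * poly Q t = poly (P k) t\<close> by simp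
        finally show ?thesis using False by (simp add: P'_def)
      qed
    qed
  qed
qed


lemma alg_rel:
  assumes B: "finite B" "\<forall>x. in_span (rat_fun_field S t) B x"
  shows "\<exists>n P. (\<forall>k. coeffs_in S (P k)) \<and> poly (P n) t \<noteq> 0 \<and> (\<Sum>k\<le>n. poly (P k) t * y ^ k) = 0"
proof -
  let ?R = "rat_fun_field S t"
  define N where "N = card B"
  have R: "subfield ?R" by (rule rf_subfield)
  have "\<exists>c. (\<forall>k\<in>{..N}. c k \<in> ?R) \<and> (\<exists>k\<in>{..N}. c k \<noteq> 0) \<and> (\<Sum>k\<in>{..N}. c k * y ^ k) = 0"
    by (rule DEP[OF R B(1), of "{..N}" "\<lambda>k. y ^ k"]) (use B(2) in \<open>simp_all add: N_def\<close>)
  then obtain c where c: "\<forall>k\<in>{..N}. c k \<in> ?R" "\<exists>k\<in>{..N}. c k \<noteq> 0" "(\<Sum>k\<in>{..N}. c k * y ^ k) = 0"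
    by blast
  have "\<exists>Q P. coeffs_in S Q \<and> poly Q t \<noteq> 0 \<and> (\<forall>i. coeffs_in S (P i)) \<and> (\<forall>i\<in>{..N}. c i * poly Q t = poly (P i) t)"
    by (rule common_den[of "{..N}" c t]) (use c(1) in simp_all)
  then obtain Q P where QP: "coeffs_in S Q" "poly Q t \<noteq> 0" "\<forall>i. coeffs_in S (P i)" "\<forall>i\<in>{..N}. c i * poly Q t = poly (P i) t"
    by blast
  have rel: "(\<Sum>k\<le>N. poly (P k) t * y ^ k) = 0"
  proof -
    have "(\<Sum>k\<le>N. poly (P k) t * y ^ k) = (\<Sum>k\<le>N. poly Q t * (c k * y ^ k))"
    proof (rule sum.cong)
      fix k assume "k \<in> {..N}"
      hence "c k * poly Q t = poly (P k) t" using QP(4) by blast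
      thus "poly (P k) t * y ^ k = poly Q t * (c k * y ^ k)" by (metis mult.assoc mult.commute)
    qed simp
    also have "\<dots> = poly Q t * (\<Sum>k\<le>N. c k * y ^ k)" by (simp add: sum_distrib_left)
    finally show ?thesis using c(3) by simp
  qed
  define K where "K = {k\<in>{..N}. poly (P k) t \<noteq> 0}"
  obtain k0 where k0: "k0 \<le> N" "c k0 \<noteq> 0" using c(2) by auto
  have "poly (P k0) t \<noteq> 0" using QP(2) QP(4) k0 by (metis atMost_iff mult_eq_0_iff)
  hence K: "finite K" "K \<noteq> {}" unfolding K_def using k0 by auto
  define n where "n = Max K"
  have n: "n \<in> K" "\<And>k. k \<in> K \<Longrightarrow> k \<le> n" using K by (auto simp: n_def)
  have nN: "n \<le> N" using n(1) by (simp add: K_def)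
  have z: "poly (P i) t = 0" if "i \<le> N" "n < i" for i
    using n(2)[of i] that by (force simp: K_def)
  have "(\<Sum>k\<le>n. poly (P k) t * y ^ k) = (\<Sum>k\<le>N. poly (P k) t * y ^ k)"
    by (rule sum.mono_neutral_left) (use nN z in auto)
  hence "(\<Sum>k\<le>n. poly (P k) t * y ^ k) = 0" using rel by simp
  moreover have "poly (P n) t \<noteq> 0" using n(1) by (simp add: K_def)
  ultimately show ?thesis using QP(3) by (intro exI[of _ n] exI[of _ P]) simp
qed

end


lemma KEY:
  assumes Fq: "subfield Fq" and ff: "function_field_over Fq" and s: "transcendental_over Fq s"
  shows "\<exists>n p. (\<forall>k. coeffs_in Fq (p k)) \<and> poly (p n) s \<noteq> 0 \<and> (\<Sum>k\<le>n. poly (p k) s * f ^ k) = 0"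
proof -
  obtain t B where t: "transcendental_over Fq t" and B: "finite B" "\<forall>x. in_span (rat_fun_field Fq t) B x"
    using ff unfolding function_field_over_def finite_dim_over_def in_span_def by blast
  let ?E = "rat_fun_field Fq s"
  have E: "subfield ?E" using rf_subfield[OF Fq] .
  have Ecl: "cl ?E" using E by (rule subfield_cl)
  have FqE: "Fq \<subseteq> ?E" using rf_const[OF Fq] by blast
  obtain n P where P: "\<forall>k. coeffs_in Fq (P k)" "poly (P n) t \<noteq> 0" "(\<Sum>k\<le>n. poly (P k) t * s ^ k) = 0"
    using alg_rel[OF Fq B, of s] by blast
  define M where "M = Max ((\<lambda>k. degree (P k)) ` {..n})"
  have degM: "degree (P k) \<le> M" if "k \<le> n" for k
    unfolding M_def using that by (intro Max_ge) auto
  define G where "G m = (\<Sum>k\<le>n. monom (coeff (P k) m) k)" for m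
  have polyG: "poly (G m) s = (\<Sum>k\<le>n. coeff (P k) m * s ^ k)" for m
    by (simp add: G_def poly_sum poly_monom)
  have Gin: "coeffs_in Fq (G m)" for m
    unfolding G_def
    by (rule coeffs_in_sum[OF subfield_cl[OF Fq]], rule coeffs_in_monom[OF subfield_cl[OF Fq]])
      (use P(1) in \<open>simp add: coeffs_in_def\<close>)
  define e where "e m = poly (G m) s" for m
  have eE: "e m \<in> ?E" for m unfolding e_def by (rule rf_poly[OF Fq Gin])
  have rel: "(\<Sum>m\<le>M. e m * t ^ m) = 0"
  proof -
    have "(\<Sum>k\<le>n. poly (P k) t * s ^ k) = (\<Sum>k\<le>n. \<Sum>m\<le>M. coeff (P k) m * t ^ m * s ^ k)"
      by (rule sum.cong) (simp_all add: poly_bound[OF degM] sum_distrib_right)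
    also have "\<dots> = (\<Sum>m\<le>M. \<Sum>k\<le>n. coeff (P k) m * t ^ m * s ^ k)" by (rule sum.swap)
    also have "\<dots> = (\<Sum>m\<le>M. e m * t ^ m)"
      by (rule sum.cong) (simp_all add: e_def polyG sum_distrib_right sum_distrib_left mult_ac)
    finally show ?thesis using P(3) by simp
  qed
  have Pn: "P n \<noteq> 0" using P(2) by auto
  define m0 where "m0 = degree (P n)"
  have cm0: "coeff (P n) m0 \<noteq> 0" using Pn by (simp add: m0_def)
  have m0M: "m0 \<le> M" using degM[of n] by (simp add: m0_def)
  have "coeff (G m0) n = (\<Sum>k\<le>n. if k = n then coeff (P k) m0 else 0)"
    by (simp add: G_def coeff_sum coeff_monom)
  also have "\<dots> = coeff (P n) m0" by simp
  finally have "G m0 \<noteq> 0" using cm0 by auto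
  hence em0: "e m0 \<noteq> 0" using s Gin unfolding transcendental_over_def e_def by blast
  define D where "D = {m\<in>{..M}. e m \<noteq> 0}"
  have Dfin: "finite D" "D \<noteq> {}" using em0 m0M by (auto simp: D_def)
  define d where "d = Max D"
  have d: "d \<in> D" "\<And>m. m \<in> D \<Longrightarrow> m \<le> d" using Dfin by (auto simp: d_def)
  have ed: "e d \<noteq> 0" "d \<le> M" using d(1) by (auto simp: D_def)
  have ez: "e m = 0" if "m \<le> M" "d < m" for m using d(2)[of m] that by (force simp: D_def)
  have rel_d: "(\<Sum>m\<le>d. e m * t ^ m) = 0"
  proof -
    have "(\<Sum>m\<le>d. e m * t ^ m) = (\<Sum>m\<le>M. e m * t ^ m)"
      by (rule sum.mono_neutral_left) (use ed ez in auto)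
    thus ?thesis using rel by simp
  qed
  have split: "(\<Sum>m\<le>d. e m * t ^ m) = (\<Sum>m<d. e m * t ^ m) + e d * t ^ d"
    by (simp add: lessThan_Suc_atMost[symmetric])
  have td: "t ^ d = - (\<Sum>m<d. e m * t ^ m) / e d"
    using rel_d split ed(1) by (simp add: field_simps eq_neg_iff_add_eq_0 add.commute)
  define T where "T = (\<lambda>m. t ^ m) ` {..<d}"
  have Tfin: "finite T" by (simp add: T_def)
  have allpow: "in_span ?E T (t ^ k)" for k
  proof (induction k rule: less_induct)
    case (less k)
    show ?case
    proof (cases "k < d")
      case True
      then show ?thesis using in_span_elem[OF E Tfin] by (simp add: T_def)
    next
      case False
      have "t ^ k = t ^ (k - d) * t ^ d" using False by (simp add: power_add[symmetric])
      also have "\<dots> = (\<Sum>m<d. (- e m / e d) * t ^ (m + (k - d)))"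
        unfolding td by (simp add: sum_distrib_left sum_divide_distrib power_add field_simps sum_negf)
      finally have eq: "t ^ k = (\<Sum>m<d. (- e m / e d) * t ^ (m + (k - d)))" .
      show ?thesis unfolding eq
      proof (rule in_span_sum[OF E])
        fix m assume "m \<in> {..<d}"
        hence "m + (k - d) < k" using False by auto
        hence "in_span ?E T (t ^ (m + (k - d)))" by (rule less.IH)
        moreover have "- e m / e d \<in> ?E" using eE E_divide[OF E] cl_uminus[OF Ecl] by blast
        ultimately show "in_span ?E T (- e m / e d * t ^ (m + (k - d)))" by (rule in_span_smult[OF E])
      qed
    qed
  qed
  have tmul: "in_span ?E T (t * y)" if y: "in_span ?E T y" for y
  proof -
    obtain c where c: "\<forall>b\<in>T. c b \<in> ?E" "y = (\<Sum>b\<in>T. c b * b)" using y unfolding in_span_def by blast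
    have "t * y = (\<Sum>b\<in>T. c b * (t * b))" by (simp add: c(2) sum_distrib_left mult_ac)
    also have "in_span ?E T \<dots>"
    proof (rule in_span_sum[OF E])
      fix b assume b: "b \<in> T"
      then obtain m where "b = t ^ m" by (auto simp: T_def)
      hence tb: "t * b = t ^ Suc m" by simp
      have "in_span ?E T (t * b)" unfolding tb by (rule allpow)
      thus "in_span ?E T (c b * (t * b))" using c(1) b by (simp add: in_span_smult[OF E])
    qed
    finally show ?thesis .
  qed
  have tpow_mul: "in_span ?E T (t ^ m * y)" if y: "in_span ?E T y" for y m
    by (induction m) (use y tmul in \<open>simp_all add: mult.assoc\<close>)
  have pmul: "in_span ?E T (poly Q t * y)" if Q: "coeffs_in ?E Q" and y: "in_span ?E T y" for Q y
  proof -
    have "poly Q t * y = (\<Sum>i\<le>degree Q. coeff Q i * (t ^ i * y))"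
      by (simp add: poly_altdef sum_distrib_right sum_distrib_left mult_ac)
    also have "in_span ?E T \<dots>"
      by (rule in_span_sum[OF E], rule in_span_smult[OF E]) (use tpow_mul[OF y] Q in \<open>auto simp: coeffs_in_def\<close>)
    finally show ?thesis .
  qed
  have one: "in_span ?E T 1" using allpow[of 0] by simp
  have inv: "in_span ?E T (inverse (poly Q t))" if Q: "coeffs_in Fq Q" "poly Q t \<noteq> 0" for Q
  proof -
    define g where "g = poly Q t"
    have QE: "coeffs_in ?E Q" using Q(1) FqE by (rule coeffs_in_mono)
    have gk: "in_span ?E T (g ^ k)" for k
      by (induction k) (use one pmul[OF QE] in \<open>simp_all add: g_def\<close>)
    define N where "N = card T"
    have "\<exists>c. (\<forall>k\<in>{..N}. c k \<in> ?E) \<and> (\<exists>k\<in>{..N}. c k \<noteq> 0) \<and> (\<Sum>k\<in>{..N}. c k * g ^ k) = 0"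
      by (rule DEP[OF E Tfin]) (use gk in \<open>simp_all add: N_def\<close>)
    then obtain c where c: "\<forall>k\<in>{..N}. c k \<in> ?E" "\<exists>k\<in>{..N}. c k \<noteq> 0" "(\<Sum>k\<in>{..N}. c k * g ^ k) = 0"
      by blast
    define L where "L = {k\<in>{..N}. c k \<noteq> 0}"
    have Lfin: "finite L" "L \<noteq> {}" using c(2) by (auto simp: L_def)
    define l where "l = Min L"
    have l: "l \<in> L" "\<And>k. k \<in> L \<Longrightarrow> l \<le> k" using Lfin by (auto simp: l_def)
    have cl0: "c l \<noteq> 0" "l \<le> N" using l(1) by (auto simp: L_def)
    have cz: "c k = 0" if "k \<le> N" "k < l" for k using l(2)[of k] that by (force simp: L_def)
    have gne: "g \<noteq> 0" using Q(2) by (simp add: g_def)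
    define W where "W = (\<Sum>k\<in>{l<..N}. c k * g ^ (k - Suc l))"
    have "(\<Sum>k\<in>{..N}. c k * g ^ k) = (\<Sum>k\<in>{l..N}. c k * g ^ k)"
      by (rule sum.mono_neutral_right) (use cz in auto)
    also have "{l..N} = insert l {l<..N}" using cl0(2) by auto
    also have "(\<Sum>k\<in>insert l {l<..N}. c k * g ^ k) = c l * g ^ l + (\<Sum>k\<in>{l<..N}. c k * g ^ k)"
      by simp
    also have "(\<Sum>k\<in>{l<..N}. c k * g ^ k) = g ^ l * (g * W)"
      unfolding W_def sum_distrib_left
    proof (rule sum.cong)
      fix k assume "k \<in> {l<..N}"
      hence "k = l + Suc (k - Suc l)" by auto
      hence "g ^ k = g ^ l * (g * g ^ (k - Suc l))" by (metis power_Suc power_add)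
      thus "c k * g ^ k = g ^ l * (g * (c k * g ^ (k - Suc l)))" by (simp add: mult_ac)
    qed simp
    finally have "g ^ l * (c l + g * W) = 0" using c(3) by (simp add: algebra_simps)
    hence "c l + g * W = 0" using gne by simp
    hence "g * W = - c l" by (simp add: eq_neg_iff_add_eq_0 add.commute)
    hence "g * (- W / c l) = 1" using cl0(1) by (simp add: field_simps)
    hence "inverse g = - W / c l" by (rule inverse_unique)
    moreover have "in_span ?E T W" unfolding W_def
      by (rule in_span_sum[OF E], rule in_span_smult[OF E]) (use gk c(1) in auto)
    moreover have "- inverse (c l) \<in> ?E" using c(1) cl0(2) E_inverse[OF E] cl_uminus[OF Ecl] by auto
    ultimately show ?thesis using in_span_smult[OF E, of T W "- inverse (c l)"]
      by (simp add: g_def divide_inverse mult.commute)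
  qed
  have RV: "in_span ?E T x" if x: "x \<in> rat_fun_field Fq t" for x
  proof -
    obtain P' Q where PQ: "coeffs_in Fq P'" "coeffs_in Fq Q" "poly Q t \<noteq> 0" "x = poly P' t / poly Q t"
      using x unfolding rf_iff by blast
    have "x = poly P' t * inverse (poly Q t)" using PQ(4) by (simp add: divide_inverse)
    also have "in_span ?E T \<dots>"
      by (rule pmul) (use PQ inv coeffs_in_mono[OF PQ(1) FqE] in auto)
    finally show ?thesis .
  qed
  define S' where "S' = (\<lambda>(m, b). t ^ m * b) ` ({..<d} \<times> B)"
  have S'fin: "finite S'" using B(1) by (simp add: S'_def)
  have allS': "\<forall>x. in_span ?E S' x"
  proof
    fix x
    obtain c where c: "\<forall>b\<in>B. c b \<in> rat_fun_field Fq t" "x = (\<Sum>b\<in>B. c b * b)"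
      using B(2) unfolding in_span_def by blast
    show "in_span ?E S' x" unfolding c(2)
    proof (rule in_span_sum[OF E])
      fix b assume b: "b \<in> B"
      obtain cc where cc: "\<forall>\<tau>\<in>T. cc \<tau> \<in> ?E" "c b = (\<Sum>\<tau>\<in>T. cc \<tau> * \<tau>)"
        using RV[of "c b"] c(1) b unfolding in_span_def by blast
      have "c b * b = (\<Sum>\<tau>\<in>T. cc \<tau> * (\<tau> * b))" by (simp add: cc(2) sum_distrib_right sum_distrib_left mult_ac)
      also have "in_span ?E S' \<dots>"
      proof (rule in_span_sum[OF E])
        fix \<tau> assume tau: "\<tau> \<in> T"
        then obtain m where m: "m < d" "\<tau> = t ^ m" by (auto simp: T_def)
        have "\<tau> * b \<in> S'" using m b by (force simp: S'_def)
        hence "in_span ?E S' (\<tau> * b)" by (rule in_span_elem[OF E S'fin])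
        thus "in_span ?E S' (cc \<tau> * (\<tau> * b))" using cc(1) tau by (simp add: in_span_smult[OF E])
      qed
      finally show "in_span ?E S' (c b * b)" .
    qed
  qed
  show ?thesis using alg_rel[OF Fq S'fin allS', of f] .
qed


lemma place_val: "place Fq w \<Longrightarrow> valuation w"
  by (simp add: place_def discrete_valuation_def)

lemma A_cl: "cl (ring_A Fq vinf)"
proof -
  let ?A = "ring_A Fq vinf"
  have 0: "0 \<in> ?A" by (simp add: ring_A_def)
  have 1: "1 \<in> ?A" by (auto simp: ring_A_def val_one[OF place_val])
  have add: "f + g \<in> ?A" if "f \<in> ?A" "g \<in> ?A" for f g
    unfolding ring_A_def mem_Collect_eq
  proof (intro allI impI)
    fix w assume w: "place Fq w" "\<not> same_val w vinf"
    have f: "f = 0 \<or> 0 \<le> w f" and g: "g = 0 \<or> 0 \<le> w g" using that w unfolding ring_A_def by auto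
    show "f + g = 0 \<or> 0 \<le> w (f + g)"
      using f g val_add[OF place_val[OF w(1)], of f g] by (cases "f = 0"; cases "g = 0"; cases "f + g = 0"; auto simp: min_def split: if_splits)
  qed
  have mult: "f * g \<in> ?A" if "f \<in> ?A" "g \<in> ?A" for f g
    unfolding ring_A_def mem_Collect_eq
  proof (intro allI impI)
    fix w assume w: "place Fq w" "\<not> same_val w vinf"
    have f: "f = 0 \<or> 0 \<le> w f" and g: "g = 0 \<or> 0 \<le> w g" using that w unfolding ring_A_def by auto
    show "f * g = 0 \<or> 0 \<le> w (f * g)"
      using f g val_mult[OF place_val[OF w(1)], of f g] by (cases "f = 0"; cases "g = 0"; auto)
  qed
  have um: "- f \<in> ?A" if "f \<in> ?A" for f
    unfolding ring_A_def mem_Collect_eq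
  proof (intro allI impI)
    fix w assume w: "place Fq w" "\<not> same_val w vinf"
    have f: "f = 0 \<or> 0 \<le> w f" using that w unfolding ring_A_def by auto
    show "- f = 0 \<or> 0 \<le> w (- f)"
      using f val_uminus[OF place_val[OF w(1)], of f] by (cases "f = 0"; auto)
  qed
  show ?thesis unfolding cl_def using 0 1 add mult um by blast
qed

lemma Fq_A: "Fq \<subseteq> ring_A Fq vinf"
  by (auto simp: ring_A_def place_def)

section \<open>Twisted polynomials\<close>

lemma coeff_map_pow: "0 < q \<Longrightarrow> coeff (map_poly (\<lambda>c. c ^ (q ^ i)) g) n = (coeff g n) ^ (q ^ i)"
  for g :: "'a::field poly"
  by (rule coeff_map_poly) simp

lemma degree_map_pow: "degree (map_poly (\<lambda>c. c ^ (q ^ i)) g) = degree g"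
  for g :: "'a::field poly"
  by (rule degree_map_poly) simp

lemma tmult_0_left[simp]: "tmult q 0 g = 0"
  by (simp add: tmult_def)

lemma tmult_0_right[simp]: "tmult q f 0 = 0"
  by (simp add: tmult_def)

lemma tmult_degree:
  fixes f g :: "'a::field poly"
  assumes q: "0 < q" and f: "f \<noteq> 0" and g: "g \<noteq> 0"
  shows "tmult q f g \<noteq> 0 \<and> degree (tmult q f g) = degree f + degree g"
proof -
  define df where "df = degree f"
  define dg where "dg = degree g"
  define T where "T i = monom (coeff f i) i * map_poly (\<lambda>c. c ^ (q ^ i)) g" for i
  have tm: "tmult q f g = (\<Sum>i\<le>df. T i)" by (simp add: tmult_def T_def df_def)
  have degT: "degree (T i) \<le> i + dg" for i
  proof -
    have "degree (T i) \<le> degree (monom (coeff f i) i) + degree (map_poly (\<lambda>c. c ^ (q ^ i)) g)"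
      unfolding T_def by (rule degree_mult_le)
    also have "\<dots> \<le> i + dg" using degree_monom_le[of "coeff f i" i] by (simp add: degree_map_pow dg_def)
    finally show ?thesis .
  qed
  have le: "degree (tmult q f g) \<le> df + dg"
    unfolding tm by (rule degree_sum_le) (simp, metis degT add_le_mono1 le_trans atMost_iff)
  have cT: "coeff (T i) (df + dg) = (if i = df then coeff f df * (coeff g dg) ^ (q ^ df) else 0)" if "i \<le> df" for i
  proof (cases "i = df")
    case True
    then show ?thesis by (simp add: T_def coeff_monom_mult coeff_map_pow[OF q])
  next
    case False
    hence "i + dg < df + dg" using that by simp
    hence "coeff (T i) (df + dg) = 0" using degT[of i] by (intro coeff_eq_0) simp
    thus ?thesis using False by simp
  qed
  have "coeff (tmult q f g) (df + dg) = (\<Sum>i\<le>df. if i = df then coeff f df * (coeff g dg) ^ (q ^ df) else 0)"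
    unfolding tm coeff_sum by (rule sum.cong) (simp_all add: cT)
  also have "\<dots> = coeff f df * (coeff g dg) ^ (q ^ df)" by simp
  finally have c: "coeff (tmult q f g) (df + dg) \<noteq> 0" using f g by (simp add: df_def dg_def)
  hence "tmult q f g \<noteq> 0" by auto
  moreover have "df + dg \<le> degree (tmult q f g)" using c by (rule le_degree)
  ultimately show ?thesis using le by (simp add: df_def dg_def)
qed


locale DM =
  fixes Fq :: "'F::field set" and q :: nat and vinf :: "'F \<Rightarrow> int"
    and i :: "'F \<Rightarrow> 'K::field" and \<phi> :: "'F \<Rightarrow> 'K poly"
    and v :: "'K \<Rightarrow> int"
    and j :: "'K \<Rightarrow> 'L::field" and w :: "'L \<Rightarrow> rat"
  assumes Fq: "subfield Fq" "finite Fq" "card Fq = q"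
    and curve: "function_field_over Fq"
    and inf: "place Fq vinf"
    and i_hom: "ring_hom_on (ring_A Fq vinf) i"
    and drin: "drinfeld_module q (ring_A Fq vinf) i \<phi>"
    and vdisc: "discrete_valuation v"
    and not_over: "generic_char (ring_A Fq vinf) i \<longrightarrow> \<not> lies_over (ring_A Fq vinf) i v vinf"
    and L: "is_alg_closure_of_completion v j w"
begin

abbreviation "A \<equiv> ring_A Fq vinf"

lemma Acl: "cl A" by (rule A_cl)
lemma FqA: "Fq \<subseteq> A" by (rule Fq_A)
lemma Fqcl: "cl Fq" using Fq(1) by (rule subfield_cl)

lemma q2: "2 \<le> q"
proof -
  have "{0, 1} \<subseteq> Fq" using cl_0[OF Fqcl] cl_1[OF Fqcl] by blast
  hence "card {0::'F, 1} \<le> card Fq" using Fq(2) by (rule card_mono[rotated])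
  thus ?thesis using Fq(3) by simp
qed

lemma qpos: "0 < q" using q2 by simp

lemma Fq_inverse: "c \<in> Fq \<Longrightarrow> inverse c \<in> Fq" using Fq(1) by (simp add: subfield_def)

lemma fq_pow1: assumes c: "c \<in> Fq" "c \<noteq> 0" shows "c ^ (q - 1) = 1"
proof -
  define U where "U = Fq - {0}"
  have Ufin: "finite U" using Fq(2) by (simp add: U_def)
  have cardU: "card U = q - 1" using Fq(2,3) cl_0[OF Fqcl] by (simp add: U_def card_Diff_singleton)
  have img: "(\<lambda>x. c * x) ` U = U"
  proof
    show "(\<lambda>x. c * x) ` U \<subseteq> U" using c cl_mult[OF Fqcl] by (auto simp: U_def)
    show "U \<subseteq> (\<lambda>x. c * x) ` U"
    proof
      fix y assume y: "y \<in> U"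
      have "y = c * (inverse c * y)" using c by simp
      moreover have "inverse c * y \<in> U" using y c cl_mult[OF Fqcl] Fq_inverse by (auto simp: U_def)
      ultimately show "y \<in> (\<lambda>x. c * x) ` U" by blast
    qed
  qed
  have inj: "inj_on (\<lambda>x. c * x) U" using c by (auto simp: inj_on_def)
  have "(\<Prod>y\<in>U. y) = (\<Prod>x\<in>U. c * x)"
    using prod.reindex[OF inj, of "\<lambda>y. y"] img by simp
  also have "\<dots> = c ^ card U * (\<Prod>x\<in>U. x)" by (simp add: prod.distrib)
  finally have "c ^ card U * (\<Prod>x\<in>U. x) = 1 * (\<Prod>x\<in>U. x)" by simp
  moreover have "(\<Prod>x\<in>U. x) \<noteq> 0" using Ufin by (simp add: U_def)
  ultimately show ?thesis using cardU by simp
qed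

lemma fq_pow: assumes c: "c \<in> Fq" shows "c ^ q = c"
proof (cases "c = 0")
  case True then show ?thesis using qpos by simp
next
  case False
  have "c ^ q = c ^ Suc (q - 1)" using qpos by simp
  also have "\<dots> = c ^ (q - 1) * c" by (rule power_Suc2)
  finally have "c ^ q = c ^ (q - 1) * c" .
  thus ?thesis using fq_pow1[OF c False] by simp
qed

lemma i1: "i 1 = 1" using i_hom by (simp add: ring_hom_on_def)
lemma i_add: "a \<in> A \<Longrightarrow> b \<in> A \<Longrightarrow> i (a + b) = i a + i b" using i_hom by (simp add: ring_hom_on_def)
lemma i_mult: "a \<in> A \<Longrightarrow> b \<in> A \<Longrightarrow> i (a * b) = i a * i b" using i_hom by (simp add: ring_hom_on_def)
lemma i0: "i 0 = 0" using i_add[of 0 0] cl_0[OF Acl] by (metis add_cancel_right_right add_0)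
lemma i_uminus: "a \<in> A \<Longrightarrow> i (- a) = - i a"
  using i_add[of a "-a"] cl_uminus[OF Acl, of a] i0 by (metis neg_eq_iff_add_eq_0 add.right_inverse)
lemma i_diff: "a \<in> A \<Longrightarrow> b \<in> A \<Longrightarrow> i (a - b) = i a - i b"
  using i_add[of a "-b"] i_uminus[of b] cl_uminus[OF Acl, of b] by simp
lemma i_sum: "(\<And>k. k \<in> I \<Longrightarrow> f k \<in> A) \<Longrightarrow> i (\<Sum>k\<in>I. f k) = (\<Sum>k\<in>I. i (f k))"
  by (induction I rule: infinite_finite_induct) (auto simp: i0 i_add cl_sum[OF Acl])
lemma i_power: "a \<in> A \<Longrightarrow> i (a ^ n) = (i a) ^ n"
  by (induction n) (auto simp: i1 i_mult cl_power[OF Acl])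
lemma i_of_nat: "i (of_nat n) = of_nat n"
  by (induction n) (simp_all add: i0 i1 i_add[OF cl_1[OF Acl] cl_of_nat[OF Acl]])

lemma fh: "field_hom j" using L by (simp add: is_alg_closure_of_completion_def)
lemma j1: "j 1 = 1" using fh by (simp add: field_hom_def)
lemma j_add: "j (x + y) = j x + j y" using fh by (simp add: field_hom_def)
lemma j_mult: "j (x * y) = j x * j y" using fh by (simp add: field_hom_def)
lemma j0: "j 0 = 0" using j_add[of 0 0] by (metis add_cancel_right_right add_0)
lemma j_uminus: "j (- x) = - j x" using j_add[of x "-x"] j0 by (metis neg_eq_iff_add_eq_0 add.right_inverse)
lemma j_diff: "j (x - y) = j x - j y" using j_add[of x "-y"] j_uminus[of y] by simp
lemma j_power: "j (x ^ n) = (j x) ^ n" by (induction n) (auto simp: j1 j_mult)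
lemma j_sum: "j (\<Sum>k\<in>I. f k) = (\<Sum>k\<in>I. j (f k))"
  by (induction I rule: infinite_finite_induct) (auto simp: j0 j_add)
lemma j_of_nat: "j (of_nat n) = of_nat n" by (induction n) (auto simp: j0 j1 j_add)
lemma j_eq0: "j x = 0 \<longleftrightarrow> x = 0"
proof
  assume jx: "j x = 0"
  show "x = 0"
  proof (rule ccontr)
    assume "x \<noteq> 0"
    hence "j (x * inverse x) = 1" using j1 by simp
    thus False using jx j_mult by simp
  qed
qed (simp add: j0)

lemma Vv: "valuation v" using vdisc by (simp add: discrete_valuation_def)
lemma Vw: "valuation w" using L by (simp add: is_alg_closure_of_completion_def)
lemma wj: "x \<noteq> 0 \<Longrightarrow> w (j x) = of_int (v x)" using L by (simp add: is_alg_closure_of_completion_def)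

subsection \<open>Frobenius\<close>

lemma binom0_F: assumes k: "0 < k" "k < q" shows "(of_nat (q choose k) :: 'F) = 0"
proof -
  define D :: "'F poly" where "D = [:1, 1:] ^ q - monom 1 q - 1"
  have roots: "Fq \<subseteq> {x. poly D x = 0}"
  proof
    fix a assume a: "a \<in> Fq"
    have "1 + a \<in> Fq" using a cl_add[OF Fqcl] cl_1[OF Fqcl] by blast
    hence "(1 + a) ^ q = 1 + a" by (rule fq_pow)
    moreover have "a ^ q = a" using a by (rule fq_pow)
    ultimately show "a \<in> {x. poly D x = 0}" by (simp add: D_def poly_monom algebra_simps)
  qed
  have cD: "coeff D n = 0" if "q \<le> n" for n
  proof (cases "n = q")
    case True
    then show ?thesis using qpos coeff_linear_power[of "1::'F" q] by (simp add: D_def coeff_monom)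
  next
    case False
    hence "q < n" using that by simp
    moreover have "degree ([:1::'F, 1:] ^ q) = q" by (rule degree_linear_power)
    ultimately show ?thesis by (simp add: D_def coeff_monom coeff_eq_0 coeff_1)
  qed
  have "D = 0"
  proof (rule ccontr)
    assume Dne: "D \<noteq> 0"
    have "degree D < q"
    proof (rule ccontr)
      assume "\<not> degree D < q"
      hence "coeff D (degree D) = 0" using cD by simp
      thus False using Dne by simp
    qed
    moreover have "card Fq \<le> card {x. poly D x = 0}"
      using roots poly_roots_finite[OF Dne] by (rule card_mono[rotated])
    moreover have "card {x. poly D x = 0} \<le> degree D" using Dne by (rule card_poly_roots_bound)
    ultimately show False using Fq(3) by simp
  qed
  hence "coeff D k = 0" by simp
  moreover have "coeff D k = of_nat (q choose k)"
    using k coeff_linear_poly_power[of k q "1::'F" 1] by (simp add: D_def coeff_monom coeff_1)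
  ultimately show ?thesis by simp
qed

lemma binom0: assumes "0 < k" "k < q" shows "(of_nat (q choose k) :: 'L) = 0"
proof -
  have "(of_nat (q choose k) :: 'L) = j (i (of_nat (q choose k)))" by (simp add: i_of_nat j_of_nat)
  also have "\<dots> = 0" using binom0_F[OF assms] by (simp add: i0 j0)
  finally show ?thesis .
qed

lemma frob_add: "(x + y) ^ q = x ^ q + (y :: 'L) ^ q"
proof -
  have "(x + y) ^ q = (\<Sum>k\<le>q. of_nat (q choose k) * x ^ k * y ^ (q - k))" by (rule binomial_ring)
  also have "\<dots> = (\<Sum>k\<in>{0, q}. of_nat (q choose k) * x ^ k * y ^ (q - k))"
    by (rule sum.mono_neutral_right) (use binom0 in auto)
  also have "\<dots> = x ^ q + y ^ q" using qpos by simp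
  finally show ?thesis .
qed

lemma frobn_add: "(x + y) ^ (q ^ n) = x ^ (q ^ n) + (y :: 'L) ^ (q ^ n)"
  by (induction n arbitrary: x y) (simp_all add: power_mult frob_add)

lemma frobn_0: "(0::'L) ^ (q ^ n) = 0" using qpos by simp

lemma frobn_sum: "(\<Sum>k\<in>I. f k) ^ (q ^ n) = (\<Sum>k\<in>I. (f k :: 'L) ^ (q ^ n))"
  by (induction I rule: infinite_finite_induct) (simp_all add: frobn_0 frobn_add)

lemma frobn_uminus: "(- x) ^ (q ^ n) = - ((x :: 'L) ^ (q ^ n))"
  using frobn_add[of x "-x" n] frobn_0 by (metis neg_eq_iff_add_eq_0 add.right_inverse)

end


context DM begin

definition ev :: "'K poly \<Rightarrow> 'L \<Rightarrow> 'L" where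
  "ev f x = (\<Sum>n\<le>degree f. j (coeff f n) * x ^ (q ^ n))"

lemma degree_map_j: "degree (map_poly j f) = degree f"
  by (rule degree_map_poly) (simp add: j_eq0)

lemma ev_tau: "tau_eval q (map_poly j f) x = ev f x"
  by (simp add: tau_eval_def ev_def degree_map_j coeff_map_poly j0)

lemma ev_bound: assumes "degree f \<le> N" shows "ev f x = (\<Sum>n\<le>N. j (coeff f n) * x ^ (q ^ n))"
  unfolding ev_def
  by (rule sum.mono_neutral_left) (use assms in \<open>auto simp: coeff_eq_0 j0\<close>)

lemma ev_add: "ev (f + g) x = ev f x + ev g x"
proof -
  define N where "N = max (degree f) (degree g)"
  have "ev (f + g) x = (\<Sum>n\<le>N. j (coeff (f + g) n) * x ^ (q ^ n))"
    by (rule ev_bound) (simp add: N_def degree_add_le)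
  also have "\<dots> = (\<Sum>n\<le>N. j (coeff f n) * x ^ (q ^ n)) + (\<Sum>n\<le>N. j (coeff g n) * x ^ (q ^ n))"
    by (simp add: j_add distrib_right sum.distrib)
  also have "\<dots> = ev f x + ev g x" using ev_bound[of f N x] ev_bound[of g N x] by (simp add: N_def)
  finally show ?thesis .
qed

lemma ev_zero[simp]: "ev 0 x = 0" by (simp add: ev_def j0)

lemma ev_sum: "ev (\<Sum>k\<in>I. f k) x = (\<Sum>k\<in>I. ev (f k) x)"
  by (induction I rule: infinite_finite_induct) (simp_all add: ev_add)

lemma ev_x0[simp]: "ev f 0 = 0" by (simp add: ev_def frobn_0)

lemma ev_xadd: "ev f (x + y) = ev f x + ev f y"
  by (simp add: ev_def frobn_add distrib_left sum.distrib)

lemma ev_xuminus: "ev f (- x) = - ev f x"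
  by (simp add: ev_def frobn_uminus sum_negf)

lemma ev_xdiff: "ev f (x - y) = ev f x - ev f y"
  using ev_xadd[of f x "-y"] ev_xuminus[of f y] by simp

lemma ev_const: "ev [:c:] x = j c * x" by (simp add: ev_def)

lemma ev_monom_map:
  "ev (monom c k * map_poly (\<lambda>c. c ^ (q ^ k)) g) x = j c * (ev g x) ^ (q ^ k)"
proof -
  define h where "h = map_poly (\<lambda>c. c ^ (q ^ k)) g"
  define dg where "dg = degree g"
  have dh: "degree h = dg" by (simp add: h_def dg_def degree_map_pow)
  have ch: "coeff h m = (coeff g m) ^ (q ^ k)" for m by (simp add: h_def coeff_map_pow[OF qpos])
  have deg: "degree (monom c k * h) \<le> k + dg"
    using degree_mult_le[of "monom c k" h] degree_monom_le[of c k] dh by simp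
  have "ev (monom c k * h) x = (\<Sum>n\<le>k + dg. j (coeff (monom c k * h) n) * x ^ (q ^ n))"
    by (rule ev_bound[OF deg])
  also have "\<dots> = (\<Sum>n\<in>(\<lambda>m. m + k) ` {..dg}. j (coeff (monom c k * h) n) * x ^ (q ^ n))"
  proof (rule sum.mono_neutral_right)
    show "(\<lambda>m. m + k) ` {..dg} \<subseteq> {..k + dg}" by auto
    show "\<forall>n\<in>{..k + dg} - (\<lambda>m. m + k) ` {..dg}. j (coeff (monom c k * h) n) * x ^ (q ^ n) = 0"
    proof
      fix n assume n: "n \<in> {..k + dg} - (\<lambda>m. m + k) ` {..dg}"
      have "n < k"
      proof (rule ccontr)
        assume "\<not> n < k"
        hence "n = (n - k) + k" "n - k \<le> dg" using n by auto
        thus False using n by blast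
      qed
      thus "j (coeff (monom c k * h) n) * x ^ (q ^ n) = 0" by (simp add: coeff_monom_mult j0)
    qed
  qed simp
  also have "\<dots> = (\<Sum>m\<le>dg. j (coeff (monom c k * h) (m + k)) * x ^ (q ^ (m + k)))"
    by (subst sum.reindex) (auto simp: inj_on_def)
  also have "\<dots> = (\<Sum>m\<le>dg. j c * (j (coeff g m) * x ^ (q ^ m)) ^ (q ^ k))"
    by (rule sum.cong) (simp_all add: coeff_monom_mult ch j_mult j_power power_mult_distrib power_add power_mult)
  also have "\<dots> = j c * (ev g x) ^ (q ^ k)"
    by (simp add: ev_def dg_def frobn_sum sum_distrib_left)
  finally show ?thesis by (simp add: h_def)
qed

lemma ev_tmult: "ev (tmult q f g) x = ev f (ev g x)"
proof -
  have "ev (tmult q f g) x = (\<Sum>i\<le>degree f. ev (monom (coeff f i) i * map_poly (\<lambda>c. c ^ (q ^ i)) g) x)"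
    by (simp add: tmult_def ev_sum)
  also have "\<dots> = (\<Sum>i\<le>degree f. j (coeff f i) * (ev g x) ^ (q ^ i))" by (simp add: ev_monom_map)
  also have "\<dots> = ev f (ev g x)" by (rule ev_def[symmetric])
  finally show ?thesis .
qed

lemma ev_roots: assumes f: "f \<noteq> 0" shows "finite {x. ev f x = 0}"
proof -
  define P where "P = (\<Sum>n\<le>degree f. monom (j (coeff f n)) (q ^ n))"
  have pe: "poly P x = ev f x" for x by (simp add: P_def ev_def poly_sum poly_monom)
  have inj: "q ^ n = q ^ m \<longleftrightarrow> n = m" for n m using q2 by (simp add: power_inject_exp)
  have "coeff P (q ^ degree f) = (\<Sum>n\<le>degree f. if n = degree f then j (coeff f n) else 0)"
    unfolding P_def coeff_sum by (rule sum.cong) (auto simp: coeff_monom inj)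
  also have "\<dots> = j (lead_coeff f)" by simp
  finally have "P \<noteq> 0" using f j_eq0 by auto
  hence "finite {x. poly P x = 0}" by (rule poly_roots_finite)
  thus ?thesis by (simp add: pe)
qed

subsection \<open>The Drinfeld module\<close>

lemma phi1: "\<phi> 1 = 1" using drin by (simp add: drinfeld_module_def)
lemma phi_add: "a \<in> A \<Longrightarrow> b \<in> A \<Longrightarrow> \<phi> (a + b) = \<phi> a + \<phi> b"
  using drin by (simp add: drinfeld_module_def)
lemma phi_mult: "a \<in> A \<Longrightarrow> b \<in> A \<Longrightarrow> \<phi> (a * b) = tmult q (\<phi> a) (\<phi> b)"
  using drin by (simp add: drinfeld_module_def)
lemma phi_coeff0: "a \<in> A \<Longrightarrow> coeff (\<phi> a) 0 = i a"
  using drin by (simp add: drinfeld_module_def)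
lemma phi_nonconst: "\<exists>a\<in>A. \<phi> a \<noteq> [:i a:]"
  using drin by (simp add: drinfeld_module_def)

lemma phi0: "\<phi> 0 = 0" using phi_add[of 0 0] cl_0[OF Acl] by (metis add_cancel_right_right add_0)

lemma ev_comm: assumes "a \<in> A" "b \<in> A" shows "ev (\<phi> a) (ev (\<phi> b) y) = ev (\<phi> b) (ev (\<phi> a) y)"
proof -
  have "ev (\<phi> a) (ev (\<phi> b) y) = ev (\<phi> (a * b)) y" using assms by (simp add: phi_mult ev_tmult)
  also have "\<dots> = ev (\<phi> (b * a)) y" by (simp add: mult.commute)
  also have "\<dots> = ev (\<phi> b) (ev (\<phi> a) y)" using assms by (simp add: phi_mult ev_tmult)
  finally show ?thesis .
qed

lemma i_Fq_nz: assumes "c \<in> Fq" "c \<noteq> 0" shows "i c \<noteq> 0"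
proof
  assume ic: "i c = 0"
  have "inverse c \<in> A" using Fq_inverse[OF assms(1)] FqA by blast
  hence "i (c * inverse c) = i c * i (inverse c)" using assms FqA by (intro i_mult) auto
  thus False using ic assms(2) i1 by simp
qed

lemma phi_Fq: assumes c: "c \<in> Fq" shows "\<phi> c = [:i c:]"
proof (cases "c = 0")
  case True then show ?thesis by (simp add: phi0 i0)
next
  case False
  have cA: "c \<in> A" "inverse c \<in> A" using c Fq_inverse[OF c] FqA by auto
  have prod: "tmult q (\<phi> c) (\<phi> (inverse c)) = 1"
    using phi_mult[OF cA] False phi1 by simp
  have n1: "\<phi> c \<noteq> 0" using prod by auto
  have n2: "\<phi> (inverse c) \<noteq> 0" using prod by auto
  have "degree (\<phi> c) + degree (\<phi> (inverse c)) = 0"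
    using tmult_degree[OF qpos n1 n2] prod by simp
  hence "degree (\<phi> c) = 0" by simp
  hence "\<phi> c = [:coeff (\<phi> c) 0:]" by (simp add: degree_0_id)
  thus ?thesis using phi_coeff0[OF cA(1)] by simp
qed

lemma v_i_Fq: assumes "c \<in> Fq" "c \<noteq> 0" shows "v (i c) = 0"
proof -
  have "i (c ^ (q - 1)) = (i c) ^ (q - 1)" using assms FqA by (intro i_power) auto
  hence "(i c) ^ (q - 1) = 1" using fq_pow1[OF assms] i1 by simp
  hence "of_nat (q - 1) * v (i c) = 0" using val_power[OF Vv i_Fq_nz[OF assms], of "q - 1"] val_one[OF Vv] by simp
  moreover have "q - 1 \<noteq> 0" using q2 by simp
  ultimately show ?thesis by simp
qed

lemma phi_poly:
  assumes a: "a \<in> A" and d: "1 \<le> degree (\<phi> a)"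
  shows "coeffs_in Fq g \<Longrightarrow> g \<noteq> 0 \<Longrightarrow> \<phi> (poly g a) \<noteq> 0 \<and> degree (\<phi> (poly g a)) = degree g * degree (\<phi> a)"
proof (induction g rule: pCons_induct)
  case 0 then show ?case by simp
next
  case (pCons c g')
  have c: "c \<in> Fq" and g': "coeffs_in Fq g'" using pCons.prems(1) by (auto simp: coeffs_in_pCons)
  have cA: "c \<in> A" using c FqA by blast
  have gA: "poly g' a \<in> A" using cl_poly[OF Acl coeffs_in_mono[OF g' FqA] a] .
  have eq: "\<phi> (poly (pCons c g') a) = [:i c:] + tmult q (\<phi> a) (\<phi> (poly g' a))"
    using cA a gA cl_mult[OF Acl a gA] by (simp add: phi_add phi_mult phi_Fq[OF c])
  show ?case
  proof (cases "g' = 0")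
    case True
    hence "c \<noteq> 0" using pCons.prems(2) by simp
    hence "i c \<noteq> 0" using i_Fq_nz c by blast
    then show ?thesis using eq True by (simp add: phi0)
  next
    case False
    have IH: "\<phi> (poly g' a) \<noteq> 0 \<and> degree (\<phi> (poly g' a)) = degree g' * degree (\<phi> a)"
      using pCons.IH[OF g' False] .
    have pa: "\<phi> a \<noteq> 0" using d by auto
    have tm: "tmult q (\<phi> a) (\<phi> (poly g' a)) \<noteq> 0 \<and>
        degree (tmult q (\<phi> a) (\<phi> (poly g' a))) = degree (\<phi> a) + degree g' * degree (\<phi> a)"
      using tmult_degree[OF qpos pa] IH by simp
    hence lt: "degree [:i c:] < degree (tmult q (\<phi> a) (\<phi> (poly g' a)))" using d by simp
    have "degree (\<phi> (poly (pCons c g') a)) = degree (tmult q (\<phi> a) (\<phi> (poly g' a)))"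
      unfolding eq by (rule degree_add_eq_right[OF lt])
    hence "degree (\<phi> (poly (pCons c g') a)) = degree (pCons c g') * degree (\<phi> a)"
      using tm False by simp
    moreover have "\<phi> (poly (pCons c g') a) \<noteq> 0"
    proof
      assume "\<phi> (poly (pCons c g') a) = 0"
      hence "degree (\<phi> (poly (pCons c g') a)) = 0" by simp
      thus False using \<open>degree (\<phi> (poly (pCons c g') a)) = degree (tmult q (\<phi> a) (\<phi> (poly g' a)))\<close> tm d by simp
    qed
    ultimately show ?thesis by simp
  qed
qed

end


lemma pcons_shift: "p = pCons (coeff p 0) (poly_shift 1 p)"
  by (simp add: poly_eq_iff coeff_pCons coeff_poly_shift split: nat.split)

lemma poly_shift_eval: "poly p x = coeff p 0 + x * poly (poly_shift 1 p) x"
  by (subst pcons_shift) simp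

context DM begin

lemma reduce:
  assumes a0: "a0 \<in> A" "a0 \<noteq> 0" and a: "a \<in> A"
  shows "(\<forall>k. coeffs_in Fq (p k)) \<Longrightarrow> (\<forall>k\<le>n. degree (p k) \<le> N) \<Longrightarrow> (\<exists>k\<le>n. p k \<noteq> 0) \<Longrightarrow>
    (\<Sum>k\<le>n. poly (p k) a0 * a ^ k) = 0 \<Longrightarrow>
    \<exists>g h. coeffs_in Fq g \<and> g \<noteq> 0 \<and> h \<in> A \<and> poly g a = a0 * h"
proof (induction N arbitrary: p)
  case (0 p)
  have const: "p k = [:coeff (p k) 0:]" if "k \<le> n" for k
    using 0(2) that by (simp add: degree_0_id)
  obtain k0 where k0: "k0 \<le> n" "p k0 \<noteq> 0" using 0(3) by blast
  define g where "g = (\<Sum>k\<le>n. monom (coeff (p k) 0) k)"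
  have "poly g a = (\<Sum>k\<le>n. coeff (p k) 0 * a ^ k)" by (simp add: g_def poly_sum poly_monom)
  also have "\<dots> = (\<Sum>k\<le>n. poly (p k) a0 * a ^ k)"
    by (rule sum.cong) (simp, subst (2) const, simp_all)
  finally have pg: "poly g a = a0 * 0" using 0(4) by simp
  have "coeff g k0 = (\<Sum>k\<le>n. if k = k0 then coeff (p k) 0 else 0)"
    unfolding g_def coeff_sum by (rule sum.cong) (auto simp: coeff_monom)
  also have "\<dots> = coeff (p k0) 0" using k0(1) by simp
  finally have "coeff g k0 \<noteq> 0" using k0 const[OF k0(1)] by (metis pCons_0_0)
  hence "g \<noteq> 0" by auto
  moreover have "coeffs_in Fq g" unfolding g_def
    by (rule coeffs_in_sum[OF Fqcl], rule coeffs_in_monom[OF Fqcl]) (use 0(1) in \<open>simp add: coeffs_in_def\<close>)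
  ultimately show ?case using pg cl_0[OF Acl] by blast
next
  case (Suc N p)
  define sh where "sh k = poly_shift 1 (p k)" for k
  have shc: "coeffs_in Fq (sh k)" for k using Suc.prems(1) by (simp add: sh_def coeffs_in_def coeff_poly_shift)
  have shA: "poly (sh k) a0 \<in> A" for k using cl_poly[OF Acl coeffs_in_mono[OF shc FqA] a0(1)] .
  have ev: "poly (p k) a0 = coeff (p k) 0 + a0 * poly (sh k) a0" for k
    by (simp add: sh_def poly_shift_eval[of "p k"])
  show ?case
  proof (cases "\<exists>k\<le>n. coeff (p k) 0 \<noteq> 0")
    case True
    then obtain k0 where k0: "k0 \<le> n" "coeff (p k0) 0 \<noteq> 0" by blast
    define g where "g = (\<Sum>k\<le>n. monom (coeff (p k) 0) k)"
    define h where "h = - (\<Sum>k\<le>n. poly (sh k) a0 * a ^ k)"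
    have "0 = (\<Sum>k\<le>n. (coeff (p k) 0 + a0 * poly (sh k) a0) * a ^ k)" using Suc.prems(4) by (simp add: ev)
    also have "\<dots> = poly g a + a0 * (\<Sum>k\<le>n. poly (sh k) a0 * a ^ k)"
      by (simp add: g_def poly_sum poly_monom distrib_right sum.distrib sum_distrib_left mult.assoc)
    finally have pg: "poly g a = a0 * h" by (simp add: h_def eq_neg_iff_add_eq_0)
    have "coeff g k0 = (\<Sum>k\<le>n. if k = k0 then coeff (p k) 0 else 0)"
      unfolding g_def coeff_sum by (rule sum.cong) (auto simp: coeff_monom)
    also have "\<dots> = coeff (p k0) 0" using k0(1) by simp
    finally have "g \<noteq> 0" using k0(2) by auto
    moreover have "coeffs_in Fq g" unfolding g_def
      by (rule coeffs_in_sum[OF Fqcl], rule coeffs_in_monom[OF Fqcl]) (use Suc.prems(1) in \<open>simp add: coeffs_in_def\<close>)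
    moreover have "h \<in> A" unfolding h_def
      by (rule cl_uminus[OF Acl], rule cl_sum[OF Acl], rule cl_mult[OF Acl]) (use shA cl_power[OF Acl a] in auto)
    ultimately show ?thesis using pg by blast
  next
    case False
    hence ev0: "poly (p k) a0 = a0 * poly (sh k) a0" if "k \<le> n" for k using ev[of k] that by simp
    have "a0 * (\<Sum>k\<le>n. poly (sh k) a0 * a ^ k) = (\<Sum>k\<le>n. poly (p k) a0 * a ^ k)"
      by (simp add: sum_distrib_left ev0 mult.assoc)
    hence rel: "(\<Sum>k\<le>n. poly (sh k) a0 * a ^ k) = 0" using Suc.prems(4) a0(2) by simp
    have deg: "\<forall>k\<le>n. degree (sh k) \<le> N"
    proof (intro allI impI)
      fix k assume k: "k \<le> n"
      show "degree (sh k) \<le> N"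
      proof (rule degree_le)
        show "\<forall>i>N. coeff (sh k) i = 0"
          using Suc.prems(2) k by (auto simp: sh_def coeff_poly_shift intro!: coeff_eq_0)
      qed
    qed
    have nz: "\<exists>k\<le>n. sh k \<noteq> 0"
    proof -
      obtain k0 where k0: "k0 \<le> n" "p k0 \<noteq> 0" using Suc.prems(3) by blast
      have "p k0 = pCons (coeff (p k0) 0) (sh k0)" unfolding sh_def by (rule pcons_shift)
      hence "sh k0 \<noteq> 0" using False k0 by auto
      thus ?thesis using k0 by blast
    qed
    show ?thesis using Suc.IH[of sh] shc deg nz rel by blast
  qed
qed

lemma phi_inj: assumes a0: "a0 \<in> A" "a0 \<noteq> 0" shows "\<phi> a0 \<noteq> 0"
proof
  assume z: "\<phi> a0 = 0"
  obtain a where a: "a \<in> A" "\<phi> a \<noteq> [:i a:]" using phi_nonconst by blast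
  have d: "1 \<le> degree (\<phi> a)"
  proof (rule ccontr)
    assume "\<not> 1 \<le> degree (\<phi> a)"
    hence "degree (\<phi> a) = 0" by simp
    hence "\<phi> a = [:coeff (\<phi> a) 0:]" by (simp add: degree_0_id)
    thus False using a phi_coeff0[OF a(1)] by simp
  qed
  have "\<exists>n p. (\<forall>k. coeffs_in Fq (p k)) \<and> (\<exists>k\<le>n. p k \<noteq> 0) \<and> (\<Sum>k\<le>n. poly (p k) a0 * a ^ k) = 0"
  proof (cases "transcendental_over Fq a0")
    case True
    obtain n p where np: "\<forall>k. coeffs_in Fq (p k)" "poly (p n) a0 \<noteq> 0" "(\<Sum>k\<le>n. poly (p k) a0 * a ^ k) = 0"
      using KEY[OF Fq(1) curve True, of a] by blast
    have "p n \<noteq> 0" using np(2) by auto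
    thus ?thesis using np by blast
  next
    case False
    then obtain P where P: "coeffs_in Fq P" "P \<noteq> 0" "poly P a0 = 0"
      unfolding transcendental_over_def by blast
    show ?thesis using P by (intro exI[of _ 0] exI[of _ "\<lambda>_. P"]) simp
  qed
  then obtain n p where np: "\<forall>k. coeffs_in Fq (p k)" "\<exists>k\<le>n. p k \<noteq> 0" "(\<Sum>k\<le>n. poly (p k) a0 * a ^ k) = 0"
    by blast
  define N where "N = Max ((\<lambda>k. degree (p k)) ` {..n})"
  have "\<forall>k\<le>n. degree (p k) \<le> N" unfolding N_def by (auto intro: Max_ge)
  then obtain g h where gh: "coeffs_in Fq g" "g \<noteq> 0" "h \<in> A" "poly g a = a0 * h"
    using reduce[OF a0 a(1) np(1) _ np(2,3)] by blast
  have "\<phi> (poly g a) = tmult q (\<phi> a0) (\<phi> h)" using gh(4) phi_mult[OF a0(1) gh(3)] by simp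
  also have "\<dots> = 0" using z by simp
  finally show False using phi_poly[OF a(1) d gh(1,2)] by simp
qed

end


context DM begin

lemma i_poly: assumes "coeffs_in Fq P" "a \<in> A"
  shows "i (poly P a) = (\<Sum>k\<le>degree P. i (coeff P k) * (i a) ^ k)"
proof -
  have cA: "coeff P k \<in> A" for k using assms(1) FqA by (auto simp: coeffs_in_def)
  have "i (poly P a) = (\<Sum>k\<le>degree P. i (coeff P k * a ^ k))"
    unfolding poly_altdef by (rule i_sum) (use cA cl_mult[OF Acl] cl_power[OF Acl assms(2)] in auto)
  also have "\<dots> = (\<Sum>k\<le>degree P. i (coeff P k) * (i a) ^ k)"
    by (rule sum.cong) (simp_all add: i_mult[OF cA cl_power[OF Acl assms(2)]] i_power[OF assms(2)])
  finally show ?thesis .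
qed

context
  assumes gen: "generic_char A i"
begin

lemma i_nz: "a \<in> A \<Longrightarrow> a \<noteq> 0 \<Longrightarrow> i a \<noteq> 0" using gen by (auto simp: generic_char_def)

lemma neg_transc: assumes t0: "t0 \<in> A" "t0 \<noteq> 0" "v (i t0) < 0" shows "transcendental_over Fq t0"
  unfolding transcendental_over_def
proof (intro allI impI)
  fix P assume P: "coeffs_in Fq P" "P \<noteq> 0"
  define d where "d = degree P"
  define T where "T k = i (coeff P k) * (i t0) ^ k" for k
  have it0: "i t0 \<noteq> 0" using i_nz t0 by blast
  have vT: "v (T k) = of_nat k * v (i t0)" if "coeff P k \<noteq> 0" for k
  proof -
    have c: "coeff P k \<in> Fq" using P(1) by (simp add: coeffs_in_def)
    have ic: "i (coeff P k) \<noteq> 0" using i_Fq_nz[OF c that] .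
    show ?thesis using val_mult[OF Vv ic] val_power[OF Vv it0] v_i_Fq[OF c that] it0 ic
      by (simp add: T_def)
  qed
  have lead: "coeff P d \<noteq> 0" using P(2) by (simp add: d_def)
  have Td: "T d \<noteq> 0" using lead i_Fq_nz[of "coeff P d"] P(1) it0 by (simp add: T_def coeffs_in_def)
  have rest: "vgt v (v (T d)) (\<Sum>k<d. T k)"
  proof (rule vgt_sum[OF Vv])
    fix k assume k: "k \<in> {..<d}"
    show "vgt v (v (T d)) (T k)"
    proof (cases "coeff P k = 0")
      case True then show ?thesis by (simp add: T_def i0 vgt_0[OF Vv])
    next
      case False
      have "of_nat d * v (i t0) < of_nat k * v (i t0)" using k t0(3) by (simp add: mult_strict_right_mono_neg)
      thus ?thesis using vT[OF False] vT[OF lead] by (simp add: vgt_def[OF Vv])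
    qed
  qed
  have "T d + (\<Sum>k<d. T k) \<noteq> 0" using dominate[OF Vv Td rest] by simp
  moreover have "i (poly P t0) = T d + (\<Sum>k<d. T k)"
    by (simp add: i_poly[OF P(1) t0(1)] T_def d_def lessThan_Suc_atMost[symmetric])
  ultimately show "poly P t0 \<noteq> 0" using i0 by auto
qed

lemma frac: assumes t0: "t0 \<in> A" "t0 \<noteq> 0" "v (i t0) < 0"
  shows "\<exists>b\<in>A. b \<noteq> 0 \<and> b * f \<in> A"
proof (cases "f = 0")
  case True then show ?thesis using cl_1[OF Acl] cl_0[OF Acl] by (intro bexI[of _ 1]) auto
next
  case False
  obtain n p where np: "\<forall>k. coeffs_in Fq (p k)" "poly (p n) t0 \<noteq> 0" "(\<Sum>k\<le>n. poly (p k) t0 * f ^ k) = 0"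
    using KEY[OF Fq(1) curve neg_transc[OF t0], of f] by blast
  define e where "e k = poly (p k) t0" for k
  have eA: "e k \<in> A" for k unfolding e_def using cl_poly[OF Acl coeffs_in_mono[OF np(1)[rule_format] FqA] t0(1)] .
  define b where "b = e n"
  have b: "b \<in> A" "b \<noteq> 0" using eA np(2) by (auto simp: b_def e_def)
  have n1: "n \<noteq> 0"
  proof
    assume "n = 0"
    thus False using np(2,3) by simp
  qed
  define z where "z = b * f"
  define c where "c k = e k * b ^ (n - 1 - k)" for k
  have cA: "c k \<in> A" for k unfolding c_def using eA b(1) cl_mult[OF Acl] cl_power[OF Acl] by blast
  have rel: "z ^ n + (\<Sum>k<n. c k * z ^ k) = 0"
  proof -
    have A0: "b ^ (n - 1) * (\<Sum>k\<le>n. e k * f ^ k) = 0" using np(3) by (simp add: e_def)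
    have B0: "b ^ (n - 1) * (\<Sum>k\<le>n. e k * f ^ k) = z ^ n + (\<Sum>k<n. c k * z ^ k)"
    proof -
      have "b ^ (n - 1) * (\<Sum>k\<le>n. e k * f ^ k) = b ^ (n - 1) * (e n * f ^ n) + (\<Sum>k<n. b ^ (n - 1) * (e k * f ^ k))"
        by (simp add: lessThan_Suc_atMost[symmetric] distrib_left sum_distrib_left)
      also have "b ^ (n - 1) * (e n * f ^ n) = z ^ n"
      proof -
        obtain m where m: "n = Suc m" using n1 by (cases n) auto
        show ?thesis by (simp add: m z_def b_def power_mult_distrib mult_ac)
      qed
      also have "(\<Sum>k<n. b ^ (n - 1) * (e k * f ^ k)) = (\<Sum>k<n. c k * z ^ k)"
      proof (rule sum.cong)
        fix k assume "k \<in> {..<n}"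
        hence "n - 1 = (n - 1 - k) + k" by auto
        hence "b ^ (n - 1) = b ^ (n - 1 - k) * b ^ k" by (metis power_add)
        thus "b ^ (n - 1) * (e k * f ^ k) = c k * z ^ k" by (simp add: c_def z_def power_mult_distrib mult_ac)
      qed simp
      finally show ?thesis .
    qed
    show ?thesis by (rule trans[OF B0[symmetric] A0])
  qed
  have "z \<in> A" unfolding ring_A_def mem_Collect_eq
  proof (intro allI impI)
    fix w' assume w': "place Fq w'" "\<not> same_val w' vinf"
    have V': "valuation w'" using w'(1) by (rule place_val)
    show "z = 0 \<or> 0 \<le> w' z"
    proof (rule ccontr)
      assume "\<not> (z = 0 \<or> 0 \<le> w' z)"
      hence z0: "z \<noteq> 0" "w' z < 0" by auto
      have zn: "z ^ n \<noteq> 0" using z0 by simp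
      have vzn: "w' (z ^ n) = of_nat n * w' z" using val_power[OF V' z0(1)] .
      have "vgt w' (w' (z ^ n)) (\<Sum>k<n. c k * z ^ k)"
      proof (rule vgt_sum[OF V'])
        fix k assume k: "k \<in> {..<n}"
        show "vgt w' (w' (z ^ n)) (c k * z ^ k)"
        proof (cases "c k = 0")
          case True then show ?thesis by (simp add: vgt_0[OF V'])
        next
          case False
          have "0 \<le> w' (c k)" using cA[of k] w' False unfolding ring_A_def by blast
          moreover have "w' (c k * z ^ k) = w' (c k) + of_nat k * w' z"
            using val_mult[OF V' False] val_power[OF V' z0(1)] z0 by simp
          moreover have "of_nat n * w' z < of_nat k * w' z" using k z0(2) by (simp add: mult_strict_right_mono_neg)
          ultimately show ?thesis using vzn by (simp add: vgt_def[OF V'])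
        qed
      qed
      thus False using dominate[OF V' zn] rel by simp
    qed
  qed
  thus ?thesis using b by (auto simp: z_def)
qed


context
  fixes t0 assumes t0: "t0 \<in> A" "t0 \<noteq> 0" "v (i t0) < 0"
begin

definition bsel :: "'F \<Rightarrow> 'F" where "bsel f = (SOME b. b \<in> A \<and> b \<noteq> 0 \<and> b * f \<in> A)"

lemma bsel: "bsel f \<in> A \<and> bsel f \<noteq> 0 \<and> bsel f * f \<in> A"
  unfolding bsel_def by (rule someI_ex) (use frac[OF t0, of f] in blast)

definition u :: "'F \<Rightarrow> int" where "u f = v (i (bsel f * f)) - v (i (bsel f))"

lemma u_indep: assumes f: "f \<noteq> 0" and b: "b \<in> A" "b \<noteq> 0" "b * f \<in> A"
  shows "u f = v (i (b * f)) - v (i b)"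
proof -
  let ?b' = "bsel f"
  have b': "?b' \<in> A" "?b' \<noteq> 0" "?b' * f \<in> A" using bsel by auto
  have eq: "?b' * (b * f) = b * (?b' * f)" by (simp add: mult_ac)
  have "i ?b' * i (b * f) = i (?b' * (b * f))" using b b' by (simp add: i_mult)
  also have "\<dots> = i (b * (?b' * f))" by (simp only: eq)
  also have "\<dots> = i b * i (?b' * f)" using b b' by (simp add: i_mult)
  finally have "i ?b' * i (b * f) = i b * i (?b' * f)" .
  moreover have nz: "i ?b' \<noteq> 0" "i (b * f) \<noteq> 0" "i b \<noteq> 0" "i (?b' * f) \<noteq> 0"
    using b b' f i_nz by auto
  ultimately have "v (i ?b') + v (i (b * f)) = v (i b) + v (i (?b' * f))"
    using val_mult[OF Vv nz(1,2)] val_mult[OF Vv nz(3,4)] by simp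
  thus ?thesis by (simp add: u_def)
qed

lemma u_A: "a \<in> A \<Longrightarrow> a \<noteq> 0 \<Longrightarrow> u a = v (i a)"
  using u_indep[of a 1] cl_1[OF Acl] by (simp add: i1 val_one[OF Vv])

lemma u_mult: assumes "f \<noteq> 0" "g \<noteq> 0" shows "u (f * g) = u f + u g"
proof -
  obtain bf where bf: "bf \<in> A" "bf \<noteq> 0" "bf * f \<in> A" using bsel by blast
  obtain bg where bg: "bg \<in> A" "bg \<noteq> 0" "bg * g \<in> A" using bsel by blast
  have b: "bf * bg \<in> A" "bf * bg \<noteq> 0" "(bf * bg) * (f * g) \<in> A"
  proof -
    show "bf * bg \<in> A" using bf bg cl_mult[OF Acl] by blast
    show "bf * bg \<noteq> 0" using bf bg by simp
    have "(bf * bg) * (f * g) = (bf * f) * (bg * g)" by (simp add: mult_ac)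
    thus "(bf * bg) * (f * g) \<in> A" using bf bg cl_mult[OF Acl] by metis
  qed
  have e1: "(bf * bg) * (f * g) = (bf * f) * (bg * g)" by (simp add: mult_ac)
  have nz: "i (bf * f) \<noteq> 0" "i (bg * g) \<noteq> 0" "i bf \<noteq> 0" "i bg \<noteq> 0"
    using bf bg assms i_nz by auto
  have "u (f * g) = v (i ((bf * bg) * (f * g))) - v (i (bf * bg))"
    using u_indep[OF _ b] assms by simp
  also have "\<dots> = (v (i (bf * f)) + v (i (bg * g))) - (v (i bf) + v (i bg))"
    unfolding e1 using bf bg by (simp add: i_mult val_mult[OF Vv] nz)
  also have "\<dots> = u f + u g" using u_indep[OF assms(1) bf] u_indep[OF assms(2) bg] by simp
  finally show ?thesis .
qed

lemma u_add: assumes "f \<noteq> 0" "g \<noteq> 0" "f + g \<noteq> 0" shows "min (u f) (u g) \<le> u (f + g)"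
proof -
  obtain bf where bf: "bf \<in> A" "bf \<noteq> 0" "bf * f \<in> A" using bsel by blast
  obtain bg where bg: "bg \<in> A" "bg \<noteq> 0" "bg * g \<in> A" using bsel by blast
  define b where "b = bf * bg"
  have e1: "b * (f + g) = bg * (bf * f) + bf * (bg * g)" by (simp add: b_def algebra_simps)
  have X: "bg * (bf * f) \<in> A" "bf * (bg * g) \<in> A" using bf bg cl_mult[OF Acl] by auto
  have b: "b \<in> A" "b \<noteq> 0" "b * (f + g) \<in> A"
    using bf bg cl_mult[OF Acl] X cl_add[OF Acl] e1 by (auto simp: b_def)
  have nz: "i (bf * f) \<noteq> 0" "i (bg * g) \<noteq> 0" "i bf \<noteq> 0" "i bg \<noteq> 0" "i (b * (f + g)) \<noteq> 0"
    using bf bg assms b i_nz by auto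
  have ib: "i (b * (f + g)) = i bg * i (bf * f) + i bf * i (bg * g)"
    unfolding e1 using bf bg X by (simp add: i_add i_mult)
  have t1: "i bg * i (bf * f) \<noteq> 0" "i bf * i (bg * g) \<noteq> 0" using nz by auto
  have "min (v (i bg * i (bf * f))) (v (i bf * i (bg * g))) \<le> v (i (b * (f + g)))"
    using val_add[OF Vv t1] nz(5) ib by simp
  hence "min (v (i bg) + v (i (bf * f))) (v (i bf) + v (i (bg * g))) \<le> v (i (b * (f + g)))"
    using val_mult[OF Vv] nz by simp
  moreover have "u (f + g) = v (i (b * (f + g))) - v (i b)" using u_indep[OF assms(3) b] .
  moreover have "v (i b) = v (i bf) + v (i bg)" using bf bg nz by (simp add: b_def i_mult val_mult[OF Vv])
  moreover have "u f = v (i (bf * f)) - v (i bf)" "u g = v (i (bg * g)) - v (i bg)"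
    using u_indep[OF assms(1) bf] u_indep[OF assms(2) bg] by auto
  ultimately show ?thesis by linarith
qed

lemma u_val: "valuation u"
  unfolding valuation_def using u_mult u_add by blast

lemma u_Fq: "c \<in> Fq \<Longrightarrow> c \<noteq> 0 \<Longrightarrow> u c = 0"
  using u_A v_i_Fq FqA by auto

lemma u_t0: "u t0 < 0" using u_A[OF t0(1,2)] t0(3) by simp

definition e :: nat where "e = (LEAST n. 0 < n \<and> (\<exists>f. f \<noteq> 0 \<and> u f = int n))"

lemma e_ex: "\<exists>n. 0 < n \<and> (\<exists>f. f \<noteq> 0 \<and> u f = int n)"
proof -
  have "u (inverse t0) = - u t0" using val_inverse[OF u_val t0(2)] .
  thus ?thesis using u_t0 t0(2) by (intro exI[of _ "nat (- u t0)"] conjI exI[of _ "inverse t0"]) auto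
qed

lemma e_prop: "0 < e \<and> (\<exists>f. f \<noteq> 0 \<and> u f = int e)"
  unfolding e_def by (rule LeastI_ex[OF e_ex])

lemma e_min: "0 < n \<Longrightarrow> f \<noteq> 0 \<Longrightarrow> u f = int n \<Longrightarrow> e \<le> n"
  unfolding e_def by (rule Least_le) blast

lemma e_dvd: assumes f: "f \<noteq> 0" shows "int e dvd u f"
proof -
  obtain g where g: "g \<noteq> 0" "u g = int e" using e_prop by blast
  have epos: "0 < e" using e_prop by blast
  define gp where "gp k = (if 0 \<le> k then g ^ nat k else inverse (g ^ nat (- k)))" for k :: int
  have gp: "gp k \<noteq> 0 \<and> u (gp k) = k * int e" for k
    using g val_power[OF u_val g(1)] val_inverse[OF u_val] by (auto simp: gp_def)
  define k where "k = u f div int e"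
  define r where "r = u f mod int e"
  have fk: "u f = k * int e + r" by (simp add: k_def r_def)
  have r: "0 \<le> r" "r < int e" using epos by (auto simp: r_def)
  have "u (f * inverse (gp k)) = u f - k * int e"
    using u_mult[OF f] val_inverse[OF u_val] gp[of k] by simp
  hence ur: "u (f * inverse (gp k)) = r" using fk by simp
  have "r = 0"
  proof (rule ccontr)
    assume "r \<noteq> 0"
    hence "0 < nat r" using r by simp
    moreover have "f * inverse (gp k) \<noteq> 0" using f gp[of k] by simp
    ultimately have "e \<le> nat r" using e_min[of "nat r" "f * inverse (gp k)"] ur r by simp
    thus False using r by simp
  qed
  thus ?thesis using fk by simp
qed

definition w' :: "'F \<Rightarrow> int" where "w' f = u f div int e"

lemma w'_place: "place Fq w'"
proof -
  have epos: "0 < int e" using e_prop by simp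
  have val: "valuation w'" unfolding valuation_def
  proof (intro allI impI conjI)
    fix x y :: 'F assume xy: "x \<noteq> 0" "y \<noteq> 0"
    show "w' (x * y) = w' x + w' y"
      unfolding w'_def u_mult[OF xy] by (rule div_plus_div_distrib_dvd_left[OF e_dvd[OF xy(1)]])
    assume s: "x + y \<noteq> 0"
    have "min (u x) (u y) \<le> u (x + y)" using u_add[OF xy s] .
    hence "min (u x) (u y) div int e \<le> u (x + y) div int e" using epos by (rule zdiv_mono1)
    moreover have "min (u x) (u y) div int e = min (u x div int e) (u y div int e)"
    proof (cases "u x \<le> u y")
      case True
      hence "u x div int e \<le> u y div int e" using epos by (rule zdiv_mono1)
      thus ?thesis using True by (simp add: min_def)
    next
      case False
      hence "u y div int e \<le> u x div int e" using epos by (intro zdiv_mono1) auto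
      thus ?thesis using False by (simp add: min_def)
    qed
    ultimately show "min (w' x) (w' y) \<le> w' (x + y)" by (simp add: w'_def)
  qed
  obtain g where g: "g \<noteq> 0" "u g = int e" using e_prop by blast
  have disc: "\<exists>x. x \<noteq> 0 \<and> w' x = n" for n
  proof -
    define gp where "gp = (if 0 \<le> n then g ^ nat n else inverse (g ^ nat (- n)))"
    have "gp \<noteq> 0 \<and> u gp = n * int e"
      using g val_power[OF u_val g(1)] val_inverse[OF u_val] by (auto simp: gp_def)
    thus ?thesis using epos by (intro exI[of _ gp]) (simp add: w'_def)
  qed
  show ?thesis unfolding place_def discrete_valuation_def
    using val disc u_Fq by (simp add: w'_def)
qed

lemma contradiction: False
proof -
  have epos: "0 < int e" using e_prop by simp
  have wt0: "w' t0 < 0" using u_t0 epos by (simp add: w'_def pos_imp_zdiv_neg_iff)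
  have sv: "same_val w' vinf"
  proof (rule ccontr)
    assume "\<not> same_val w' vinf"
    hence "t0 = 0 \<or> 0 \<le> w' t0" using t0(1) w'_place unfolding ring_A_def by blast
    thus False using t0(2) wt0 by simp
  qed
  have "lies_over A i v vinf" unfolding lies_over_def
  proof (intro exI[of _ "real e"] conjI ballI impI)
    show "0 < real e" using e_prop by simp
    fix a assume a: "a \<in> A" "a \<noteq> 0"
    have "v (i a) = u a" using u_A[OF a] by simp
    also have "\<dots> = int e * w' a" using e_dvd[OF a(2)] by (simp add: w'_def)
    also have "w' a = vinf a" using sv a(2) by (simp add: same_val_def)
    finally show "real_of_int (v (i a)) = real e * real_of_int (vinf a)" by simp
  qed
  thus False using not_over gen by blast
qed

end

lemma gen_nonneg: "a \<in> A \<Longrightarrow> a \<noteq> 0 \<Longrightarrow> 0 \<le> v (i a)"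
  using contradiction[of a] by force

end

end


context DM begin

definition Cf :: "'K poly \<Rightarrow> rat" where
  "Cf f = 1 + (\<Sum>n\<le>degree f. of_int \<bar>v (coeff f n)\<bar>)"

definition ord :: "'K poly \<Rightarrow> nat" where "ord f = (LEAST n. coeff f n \<noteq> 0)"

lemma Cf_ge1: "1 \<le> Cf f"
  unfolding Cf_def by (simp add: sum_nonneg)

lemma Cf_two: assumes "n \<le> degree f" "m \<le> degree f" "n \<noteq> m"
  shows "of_int \<bar>v (coeff f n)\<bar> + of_int \<bar>v (coeff f m)\<bar> + 1 \<le> Cf f"
proof -
  have "(\<Sum>k\<in>{n, m}. (of_int \<bar>v (coeff f k)\<bar> :: rat)) \<le> (\<Sum>k\<le>degree f. of_int \<bar>v (coeff f k)\<bar>)"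
    by (rule sum_mono2) (use assms in auto)
  thus ?thesis using assms(3) by (simp add: Cf_def)
qed

lemma Cf_one: assumes "n \<le> degree f"
  shows "of_int \<bar>v (coeff f n)\<bar> + 1 \<le> Cf f"
proof -
  have "(\<Sum>k\<in>{n}. (of_int \<bar>v (coeff f k)\<bar> :: rat)) \<le> (\<Sum>k\<le>degree f. of_int \<bar>v (coeff f k)\<bar>)"
    by (rule sum_mono2) (use assms in auto)
  thus ?thesis by (simp add: Cf_def)
qed

lemma ord: assumes "f \<noteq> 0" shows "coeff f (ord f) \<noteq> 0" "ord f \<le> degree f" "\<And>n. n < ord f \<Longrightarrow> coeff f n = 0"
proof -
  have ex: "coeff f (degree f) \<noteq> 0" using assms by simp
  show "coeff f (ord f) \<noteq> 0" unfolding ord_def by (rule LeastI[of _ "degree f"]) (rule ex)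
  show "ord f \<le> degree f" unfolding ord_def by (rule Least_le) (rule ex)
  show "\<And>n. n < ord f \<Longrightarrow> coeff f n = 0" unfolding ord_def using not_less_Least by blast
qed

lemma wT: assumes "c \<noteq> 0" "y \<noteq> 0"
  shows "j c * y ^ (q ^ n) \<noteq> 0 \<and> w (j c * y ^ (q ^ n)) = of_int (v c) + of_nat (q ^ n) * w y"
proof -
  have jc: "j c \<noteq> 0" using assms j_eq0 by auto
  show ?thesis using val_mult[OF Vw jc] val_power[OF Vw assms(2)] wj[OF assms(1)] jc assms(2) by simp
qed

lemma qpow_mono: "m < n \<Longrightarrow> q ^ m < q ^ n" using q2 by (simp add: power_strict_increasing)

lemma LOW: assumes f: "f \<noteq> 0" and y: "y \<noteq> 0" "Cf f \<le> w y"
  shows "ev f y \<noteq> 0 \<and> w (ev f y) = of_int (v (coeff f (ord f))) + of_nat (q ^ ord f) * w y"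
proof -
  define m where "m = ord f"
  define T where "T n = j (coeff f n) * y ^ (q ^ n)" for n
  have m: "coeff f m \<noteq> 0" "m \<le> degree f" "\<And>n. n < m \<Longrightarrow> coeff f n = 0" using ord[OF f] by (auto simp: m_def)
  have Tm: "T m \<noteq> 0" "w (T m) = of_int (v (coeff f m)) + of_nat (q ^ m) * w y"
    using wT[OF m(1) y(1)] by (auto simp: T_def)
  have W1: "1 \<le> w y" using Cf_ge1[of f] y(2) by simp
  have rest: "vgt w (w (T m)) (\<Sum>n\<in>{..degree f} - {m}. T n)"
  proof (rule vgt_sum[OF Vw])
    fix n assume n: "n \<in> {..degree f} - {m}"
    show "vgt w (w (T m)) (T n)"
    proof (cases "coeff f n = 0")
      case True then show ?thesis by (simp add: T_def j0 vgt_0[OF Vw])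
    next
      case False
      have "m < n" using n m(3)[of n] False by (cases "n < m") auto
      hence qq: "of_nat (q ^ m) + 1 \<le> (of_nat (q ^ n) :: rat)" using qpow_mono[of m n] by linarith
      have "(of_nat (q ^ m) + 1) * w y \<le> of_nat (q ^ n) * w y" using qq W1 by (intro mult_right_mono) auto
      moreover have "of_int \<bar>v (coeff f n)\<bar> + of_int \<bar>v (coeff f m)\<bar> + 1 \<le> w y"
        using Cf_two[of n f m] n m(2) y(2) by auto
      moreover have Tn: "w (T n) = of_int (v (coeff f n)) + of_nat (q ^ n) * w y"
        using wT[OF False y(1)] by (simp add: T_def)
      ultimately have "w (T m) < w (T n)" unfolding Tm(2) Tn
        by (simp add: algebra_simps)
      thus ?thesis by (simp add: vgt_def[OF Vw])
    qed
  qed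
  have "ev f y = T m + (\<Sum>n\<in>{..degree f} - {m}. T n)"
    unfolding ev_def T_def using m(2) by (simp add: sum.remove)
  thus ?thesis using dominate[OF Vw Tm(1) rest] Tm(2) by (simp add: m_def)
qed

lemma EXPAND: assumes f: "f \<noteq> 0" and c0: "coeff f 0 = 0 \<or> 0 < v (coeff f 0)"
  and y: "y \<noteq> 0" "Cf f \<le> w y"
  shows "ev f y \<noteq> 0 \<and> w y < w (ev f y)"
proof -
  have L: "ev f y \<noteq> 0 \<and> w (ev f y) = of_int (v (coeff f (ord f))) + of_nat (q ^ ord f) * w y"
    by (rule LOW[OF f y])
  have W1: "1 \<le> w y" using Cf_ge1[of f] y(2) by simp
  show ?thesis
  proof (cases "coeff f 0 = 0")
    case False
    hence "ord f = 0" using ord(1)[OF f] ord(3)[OF f, of 0] by (cases "ord f") auto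
    then show ?thesis using L c0 False by simp
  next
    case True
    have o1: "ord f \<noteq> 0"
    proof
      assume "ord f = 0"
      thus False using ord(1)[OF f] True by simp
    qed
    hence "q ^ 1 \<le> q ^ ord f" using qpos by (intro power_increasing) auto
    hence n2: "2 \<le> q ^ ord f" using q2 by simp
    hence "(2::rat) \<le> of_nat (q ^ ord f)" by (metis of_nat_numeral of_nat_le_iff)
    hence "2 * w y \<le> of_nat (q ^ ord f) * w y" using W1 by (intro mult_right_mono) auto
    moreover have "of_int \<bar>v (coeff f (ord f))\<bar> + 1 \<le> w y" using Cf_one[OF ord(2)[OF f]] y(2) by simp
    ultimately show ?thesis using L by simp
  qed
qed

lemma ORB:
  assumes s: "s \<in> A" "\<phi> s \<noteq> 0" and c0: "coeff (\<phi> s) 0 = 0 \<or> 0 < v (coeff (\<phi> s) 0)"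
    and a0: "a0 \<in> A" "\<phi> a0 \<noteq> 0"
    and x: "x \<noteq> 0" "Cf (\<phi> s) \<le> w x" "ev (\<phi> a0) x = 0"
  shows False
proof -
  define f where "f = \<phi> s"
  define y where "y k = (ev f ^^ k) x" for k
  have step: "y k \<noteq> 0 \<and> Cf f \<le> w (y k) \<and> ev (\<phi> a0) (y k) = 0 \<and> w (y k) < w (y (Suc k))" for k
  proof (induction k)
    case 0
    have "ev f x \<noteq> 0 \<and> w x < w (ev f x)" using EXPAND[OF s(2) c0 x(1,2)] by (simp add: f_def)
    then show ?case using x by (simp add: y_def f_def)
  next
    case (Suc k)
    have e1: "ev f (y k) \<noteq> 0 \<and> w (y k) < w (ev f (y k))"
      using EXPAND[OF s(2) c0] Suc.IH by (simp add: f_def)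
    have ys: "y (Suc k) = ev f (y k)" by (simp add: y_def)
    have ev0: "ev (\<phi> a0) (y (Suc k)) = 0"
      unfolding ys f_def using ev_comm[OF a0(1) s(1), of "y k"] Suc.IH by simp
    have yss: "y (Suc (Suc k)) = ev f (y (Suc k))" by (simp add: y_def)
    have cf: "Cf f \<le> w (y (Suc k))" using Suc.IH e1 ys by simp
    have "ev f (y (Suc k)) \<noteq> 0 \<and> w (y (Suc k)) < w (ev f (y (Suc k)))"
      using EXPAND[OF s(2) c0, of "y (Suc k)"] e1 ys cf by (simp add: f_def)
    then show ?case using e1 ys yss ev0 cf by simp
  qed
  have sm: "strict_mono (\<lambda>k. w (y k))" unfolding strict_mono_Suc_iff using step by blast
  have "inj y"
  proof (rule injI)
    fix k l assume "y k = y l"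
    hence "w (y k) = w (y l)" by simp
    thus "k = l" using strict_mono_eq[OF sm] by simp
  qed
  moreover have "range y \<subseteq> {x. ev (\<phi> a0) x = 0}" using step by auto
  hence "finite (range y)" using ev_roots[OF a0(2)] finite_subset by blast
  ultimately show False using finite_imageD infinite_UNIV_nat by blast
qed


lemma phi_pow: assumes a: "a \<in> A" "\<phi> a \<noteq> 0"
  shows "\<phi> (a ^ N) \<noteq> 0 \<and> degree (\<phi> (a ^ N)) = N * degree (\<phi> a)"
proof (induction N)
  case 0 then show ?case by (simp add: phi1)
next
  case (Suc N)
  have "\<phi> (a ^ Suc N) = tmult q (\<phi> a) (\<phi> (a ^ N))"
    using phi_mult[OF a(1) cl_power[OF Acl a(1)]] by simp
  then show ?case using tmult_degree[OF qpos a(2)] Suc.IH by simp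
qed

lemma HIGH: assumes f: "f \<noteq> 0" and y: "y \<noteq> 0" "Cf f \<le> w y"
  shows "vge w (w y + 1) (ev f y - j (coeff f 0) * y)"
proof -
  define T where "T n = j (coeff f n) * y ^ (q ^ n)" for n
  have W1: "1 \<le> w y" using Cf_ge1[of f] y(2) by simp
  have "(\<Sum>n\<le>degree f. T n) = T 0 + (\<Sum>n\<in>{..degree f} - {0}. T n)"
    by (rule sum.remove) auto
  hence "ev f y = T 0 + (\<Sum>n\<in>{..degree f} - {0}. T n)" by (simp add: ev_def T_def)
  hence eq: "ev f y - j (coeff f 0) * y = (\<Sum>n\<in>{..degree f} - {0}. T n)" by (simp add: T_def)
  have "vge w (w y + 1) (\<Sum>n\<in>{..degree f} - {0}. T n)"
  proof (rule vge_sum[OF Vw])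
    fix n assume n: "n \<in> {..degree f} - {0}"
    show "vge w (w y + 1) (T n)"
    proof (cases "coeff f n = 0")
      case True then show ?thesis by (simp add: T_def j0 vge_0[OF Vw])
    next
      case False
      have "q ^ 1 \<le> q ^ n" using n qpos by (intro power_increasing) auto
      hence n2: "2 \<le> q ^ n" using q2 by simp
      hence "(2::rat) \<le> of_nat (q ^ n)" by (metis of_nat_numeral of_nat_le_iff)
      hence "2 * w y \<le> of_nat (q ^ n) * w y" using W1 by (intro mult_right_mono) auto
      moreover have "of_int \<bar>v (coeff f n)\<bar> + 1 \<le> w y" using Cf_one[of n f] n y(2) by auto
      moreover have "w (T n) = of_int (v (coeff f n)) + of_nat (q ^ n) * w y"
        using wT[OF False y(1)] by (simp add: T_def)
      ultimately have "w y + 1 \<le> w (T n)" by simp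
      thus ?thesis by (simp add: vge_def[OF Vw])
    qed
  qed
  thus ?thesis using eq by simp
qed

lemma CYCLE:
  assumes gen: "generic_char A i" and zero: "\<forall>a\<in>A. a \<noteq> 0 \<longrightarrow> v (i a) = 0"
    and t: "t \<in> A" "1 \<le> degree (\<phi> t)"
    and a0: "a0 \<in> A" "\<phi> a0 \<noteq> 0"
    and x: "x \<noteq> 0" "Cf (\<phi> t) \<le> w x" "ev (\<phi> a0) x = 0"
  shows False
proof -
  define f where "f = \<phi> t"
  have fne: "f \<noteq> 0" using t(2) by (auto simp: f_def)
  have tne: "t \<noteq> 0" using t(2) by (auto simp: phi0)
  have c0: "coeff f 0 = i t" by (simp add: f_def phi_coeff0[OF t(1)])
  have c0ne: "coeff f 0 \<noteq> 0" using c0 i_nz[OF gen t(1) tne] by simp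
  have vc0: "v (coeff f 0) = 0" using c0 zero t(1) tne by simp
  have o0: "ord f = 0" using c0ne unfolding ord_def by (simp add: Least_eq_0)
  have ISO: "ev f y \<noteq> 0 \<and> w (ev f y) = w y" if "y \<noteq> 0" "Cf f \<le> w y" for y
    using LOW[OF fne that] o0 vc0 by simp
  define y where "y k = (ev f ^^ k) x" for k
  have ys: "y (Suc k) = ev f (y k)" for k by (simp add: y_def)
  have P: "y k \<noteq> 0 \<and> w (y k) = w x \<and> ev (\<phi> a0) (y k) = 0" for k
  proof (induction k)
    case 0 then show ?case using x by (simp add: y_def)
  next
    case (Suc k)
    have "ev (\<phi> a0) (y (Suc k)) = 0"
      unfolding ys f_def using ev_comm[OF a0(1) t(1), of "y k"] Suc.IH by simp
    moreover have "y (Suc k) \<noteq> 0 \<and> w (y (Suc k)) = w x"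
      using ISO[of "y k"] Suc.IH x(2) ys by (simp add: f_def)
    ultimately show ?case by simp
  qed
  have "\<not> inj y"
  proof
    assume "inj y"
    moreover have "range y \<subseteq> {x. ev (\<phi> a0) x = 0}" using P by auto
    hence "finite (range y)" using ev_roots[OF a0(2)] finite_subset by blast
    ultimately show False using finite_imageD infinite_UNIV_nat by blast
  qed
  then obtain k l where kl: "k < l" "y k = y l"
    unfolding inj_def by (metis linorder_neqE_nat)
  define N where "N = l - k"
  have N: "0 < N" "l = k + N" using kl by (auto simp: N_def)
  have injb: "y1 = y2" if "y1 \<noteq> 0" "w y1 = w x" "y2 \<noteq> 0" "w y2 = w x" "ev f y1 = ev f y2" for y1 y2
  proof (rule ccontr)
    assume ne: "y1 \<noteq> y2"
    have "vge w (w x) (y1 - y2)"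
      using vge_diff[OF Vw, of "w x" y1 y2] that by (simp add: vge_def[OF Vw])
    hence "Cf f \<le> w (y1 - y2)" using ne x(2) by (simp add: vge_def[OF Vw] f_def)
    hence "ev f (y1 - y2) \<noteq> 0" using ISO[of "y1 - y2"] ne by simp
    thus False using that(5) by (simp add: ev_xdiff)
  qed
  have shift: "y k = y (k + N) \<Longrightarrow> y 0 = y N" for k
  proof (induction k)
    case 0 then show ?case by simp
  next
    case (Suc k)
    have "ev f (y k) = ev f (y (k + N))" using Suc.prems ys by simp
    hence "y k = y (k + N)" using injb P by blast
    then show ?case using Suc.IH by simp
  qed
  have cyc: "y N = x" using shift[of k] kl N by (simp add: y_def)
  define c where "c = j (coeff f 0)"
  have cne: "c \<noteq> 0" using c0ne j_eq0 by (simp add: c_def)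
  have wc: "w c = 0" using wj[OF c0ne] vc0 by (simp add: c_def)
  have CONG: "vge w (w x + 1) (y k - c ^ k * x)" for k
  proof (induction k)
    case 0 then show ?case by (simp add: y_def vge_0[OF Vw])
  next
    case (Suc k)
    have "y (Suc k) - c ^ Suc k * x = (ev f (y k) - c * y k) + c * (y k - c ^ k * x)"
      by (simp add: ys algebra_simps)
    moreover have "vge w (w x + 1) (ev f (y k) - c * y k)"
      using HIGH[OF fne, of "y k"] P[of k] x(2) by (simp add: c_def f_def)
    moreover have "vge w (w x + 1) (c * (y k - c ^ k * x))"
      using vge_mult[OF Vw Suc.IH cne] wc by simp
    ultimately show ?case using vge_add[OF Vw] by simp
  qed
  have vg: "vge w (w x + 1) ((1 - c ^ N) * x)" using CONG[of N] cyc by (simp add: algebra_simps)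
  have tN: "t ^ N \<in> A" "1 - t ^ N \<in> A" using cl_power[OF Acl t(1)] cl_diff[OF Acl] cl_1[OF Acl] by auto
  have jc: "1 - c ^ N = j (i (1 - t ^ N))"
    using tN i_diff[OF cl_1[OF Acl] tN(1)] by (simp add: i1 i_power[OF t(1)] j_diff j1 j_power c_def c0)
  show False
  proof (cases "1 - t ^ N = 0")
    case True
    hence "t ^ N = 1" by simp
    hence "\<phi> (t ^ N) = 1" using phi1 by simp
    moreover have "degree (\<phi> (t ^ N)) = N * degree (\<phi> t)" using phi_pow[OF t(1)] fne by (simp add: f_def)
    ultimately show False using N(1) t(2) by simp
  next
    case False
    have inz: "i (1 - t ^ N) \<noteq> 0" using i_nz[OF gen tN(2) False] .
    have "v (i (1 - t ^ N)) = 0" using zero tN(2) False by simp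
    hence w1: "w (1 - c ^ N) = 0" using wj[OF inz] jc by simp
    have ne1: "1 - c ^ N \<noteq> 0" using jc inz j_eq0 by simp
    have "w ((1 - c ^ N) * x) = w x" using val_mult[OF Vw ne1 x(1)] w1 by simp
    moreover have "(1 - c ^ N) * x \<noteq> 0" using ne1 x(1) by simp
    ultimately show False using vg by (simp add: vge_def[OF Vw])
  qed
qed

lemma main: "\<exists>C::real. C > 0 \<and> (\<forall>x. x \<noteq> 0 \<longrightarrow> C \<le> real_of_rat (w x) \<longrightarrow> \<not> torsion_point q A \<phi> j x)"
proof -
  have tors: "\<exists>a0\<in>A. a0 \<noteq> 0 \<and> ev (\<phi> a0) x = 0" if "torsion_point q A \<phi> j x" for x
    using that by (simp add: torsion_point_def ev_tau)
  have "\<exists>f. \<forall>x. x \<noteq> 0 \<longrightarrow> Cf f \<le> w x \<longrightarrow> \<not> torsion_point q A \<phi> j x"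
  proof (cases "generic_char A i")
    case False
    then obtain a1 where a1: "a1 \<in> A" "a1 \<noteq> 0" "i a1 = 0" unfolding generic_char_def by blast
    show ?thesis
    proof (intro exI[of _ "\<phi> a1"] allI impI notI)
      fix x assume x: "x \<noteq> 0" "Cf (\<phi> a1) \<le> w x" "torsion_point q A \<phi> j x"
      obtain a0 where a0: "a0 \<in> A" "a0 \<noteq> 0" "ev (\<phi> a0) x = 0" using tors[OF x(3)] by blast
      show False
        by (rule ORB[OF a1(1) phi_inj[OF a1(1,2)] _ a0(1) phi_inj[OF a0(1,2)] x(1,2) a0(3)])
          (simp add: phi_coeff0[OF a1(1)] a1(3))
    qed
  next
    case gen: True
    have phnz: "\<phi> a \<noteq> 0" if "a \<in> A" "a \<noteq> 0" for a
    proof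
      assume "\<phi> a = 0"
      hence "i a = 0" using phi_coeff0[OF that(1)] by simp
      thus False using i_nz[OF gen that] by simp
    qed
    show ?thesis
    proof (cases "\<exists>s\<in>A. s \<noteq> 0 \<and> 0 < v (i s)")
      case True
      then obtain s where s: "s \<in> A" "s \<noteq> 0" "0 < v (i s)" by blast
      show ?thesis
      proof (intro exI[of _ "\<phi> s"] allI impI notI)
        fix x assume x: "x \<noteq> 0" "Cf (\<phi> s) \<le> w x" "torsion_point q A \<phi> j x"
        obtain a0 where a0: "a0 \<in> A" "a0 \<noteq> 0" "ev (\<phi> a0) x = 0" using tors[OF x(3)] by blast
        show False
          by (rule ORB[OF s(1) phnz[OF s(1,2)] _ a0(1) phnz[OF a0(1,2)] x(1,2) a0(3)])
            (simp add: phi_coeff0[OF s(1)] s(3))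
      qed
    next
      case False
      have zero: "\<forall>a\<in>A. a \<noteq> 0 \<longrightarrow> v (i a) = 0"
        using False gen_nonneg[OF gen] by force
      obtain t where t: "t \<in> A" "\<phi> t \<noteq> [:i t:]" using phi_nonconst by blast
      have d: "1 \<le> degree (\<phi> t)"
      proof (rule ccontr)
        assume "\<not> 1 \<le> degree (\<phi> t)"
        hence "degree (\<phi> t) = 0" by simp
        hence "\<phi> t = [:coeff (\<phi> t) 0:]" by (simp add: degree_0_id)
        thus False using t phi_coeff0[OF t(1)] by simp
      qed
      show ?thesis
      proof (intro exI[of _ "\<phi> t"] allI impI notI)
        fix x assume x: "x \<noteq> 0" "Cf (\<phi> t) \<le> w x" "torsion_point q A \<phi> j x"
        obtain a0 where a0: "a0 \<in> A" "a0 \<noteq> 0" "ev (\<phi> a0) x = 0" using tors[OF x(3)] by blast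
        show False by (rule CYCLE[OF gen zero t(1) d a0(1) phnz[OF a0(1,2)] x(1,2) a0(3)])
      qed
    qed
  qed
  then obtain f where f: "\<forall>x. x \<noteq> 0 \<longrightarrow> Cf f \<le> w x \<longrightarrow> \<not> torsion_point q A \<phi> j x" by blast
  show ?thesis
  proof (intro exI[of _ "real_of_rat (Cf f)"] conjI allI impI)
    show "0 < real_of_rat (Cf f)" using Cf_ge1[of f] by (simp add: zero_less_of_rat_iff)
    fix x assume "x \<noteq> 0" "real_of_rat (Cf f) \<le> real_of_rat (w x)"
    thus "\<not> torsion_point q A \<phi> j x" using f by (simp add: of_rat_less_eq)
  qed
qed

end

theorem lemma4p1:
  fixes Fq :: "'F::field set" and q :: nat
    and vinf :: "'F \<Rightarrow> int"
    and i :: "'F \<Rightarrow> 'K::field" and \<phi> :: "'F \<Rightarrow> 'K poly"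
    and v :: "'K \<Rightarrow> int"
    and j :: "'K \<Rightarrow> 'L::field" and w :: "'L \<Rightarrow> rat"
  assumes Fq: "subfield Fq" "finite Fq" "card Fq = q"
    and curve: "function_field_over Fq"
    and inf: "place Fq vinf"
    and i_hom: "ring_hom_on (ring_A Fq vinf) i"
    and drin: "drinfeld_module q (ring_A Fq vinf) i \<phi>"
    and v: "discrete_valuation v"
    and not_over: "generic_char (ring_A Fq vinf) i \<longrightarrow> \<not> lies_over (ring_A Fq vinf) i v vinf"
    and L: "is_alg_closure_of_completion v j w"
  shows "\<exists>C::real. C > 0 \<and>
           (\<forall>x. x \<noteq> 0 \<longrightarrow> C \<le> real_of_rat (w x) \<longrightarrow> \<not> torsion_point q (ring_A Fq vinf) \<phi> j x)"
  proof -
  have "DM Fq q vinf i \<phi> v j w"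
    unfolding DM_def using Fq curve inf i_hom drin v not_over L by blast
  then interpret D: DM Fq q vinf i \<phi> v j w .
  show ?thesis by (rule D.main)
qed

end
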